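(* Let $\mathscr{A}$ be a quiver over a nonempty set of vertices $\Lambda$ and let $\sigma\colon \mathscr{A}\otimes\mathscr{A}\to\mathscr{A}\otimes\mathscr{A}$, $\sigma(x,y)=(x\rightharpoonup y,\,x\leftharpoonup y)$, be an involutive left-non-degenerate quiver-theoretic Yang--Baxter map. For $x,y\in\mathscr{A}$ with $\mathfrak{s}(x)=\mathfrak{s}(y)$ put $x\star y:=(x\rightharpoonup\cdot)^{-1}(y)$. Let $j\colon\mathscr{A}\to\mathscr{C}(\sigma)$ send $s\in\mathscr{A}$ to the class of the length-one path $s$. Then $j$ is injective, and the structure category $\mathscr{C}(\sigma)$: (i) satisfies a quadratic isoperimetric inequality with respect to the presentation $\mathscr{C}(\sigma)=\langle \mathscr{A}\mid x|(x\star y)\sim y|(y\star x)\text{ for all }x\neq y\in\mathscr{A}\text{ with }\mathfrak{s}(x)=\mathfrak{s}(y)\rangle^+$; (ii) has no nontrivial invertible elements; (iii) is left-cancellative; (iv) admits unique conditional right-lcms, and the complementation is given by $\star$, i.e. for distinct $x,y\in\mathscr{A}$ with the same source, $j(x)j(x\star y)=j(y)j(y\star x)$ is the right-lcm of $j(x)$ and $j(y)$; (v) is Noetherian; (vi) has as atoms exactly the elements of $j(\mathscr{A})$; (vii) has a Garside family $E$ given by the closure of $j(\mathscr{A})$ under right-lcms, and $E$ is the smallest Garside family of $\mathscr{C}(\sigma)$ containing $j(\mathscr{A})$ and all identity elements.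
   Context: A quiver over $\Lambda$ is a set $\mathscr{A}$ of arrows with source and target maps $\mathfrak{s},\mathfrak{t}\colon\mathscr{A}\to\Lambda$; $\mathscr{A}(\lambda,\Lambda)$ denotes the arrows with source $\lambda$ and $\mathscr{A}(\Lambda,\mu)$ those with target $\mu$. $\mathscr{A}\otimes\mathscr{A}$ is the quiver of composable pairs $(x,y)$ (written $x|y$), $\mathfrak{t}(x)=\mathfrak{s}(y)$, with source $\mathfrak{s}(x)$ and target $\mathfrak{t}(y)$; a morphism of quivers over $\Lambda$ preserves sources and targets. A (quiver-theoretic) Yang--Baxter map is a morphism $\sigma\colon\mathscr{A}\otimes\mathscr{A}\to\mathscr{A}\otimes\mathscr{A}$ of quivers over $\Lambda$ with $(\sigma\otimes\mathrm{id})(\mathrm{id}\otimes\sigma)(\sigma\otimes\mathrm{id})=(\mathrm{id}\otimes\sigma)(\sigma\otimes\mathrm{id})(\mathrm{id}\otimes\sigma)$ on composable triples. It is involutive if $\sigma^2=\mathrm{id}$, and left-non-degenerate if for every $x$ the map $x\rightharpoonup\cdot\colon\mathscr{A}(\mathfrak{t}(x),\Lambda)\to\mathscr{A}(\mathfrak{s}(x),\Lambda)$ is bijective. The structure category $\mathscr{C}(\sigma)$ is the category presented by generators $\mathscr{A}$ and relations $x|y\sim(x\rightharpoonup y)|(x\leftharpoonup y)$ for all composable $x|y$, i.e. the path category of $\mathscr{A}$ modulo the congruence generated by these relations (composition written left to right). In a category, $x$ left-divides $y$ if $y=xz$; a right-lcm of $x,y$ is a common right-multiple $xu=yv$ left-dividing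 every common right-multiple; conditional right-lcms means any two elements with a common right-multiple have a right-lcm. An atom is an element which in every factorization has exactly one non-invertible factor. Noetherian: the proper factor relation ($x\subset y$ iff $y=y'xy''$ with $y'$ or $y''$ non-invertible) is well-founded. A presentation satisfies a quadratic isoperimetric inequality if there is a constant $C$ such that any two paths of lengths $r,s$ representing the same element are connected by at most $C(r+s)^2$ elementary steps each replacing a subpath by the other side of a relation. For a left-cancellative category $\mathscr{C}$ and a subfamily $\mathscr{S}$, let $\mathscr{S}^\sharp=\mathscr{S}\mathscr{C}^\times\cup\mathscr{C}^\times$ ($\mathscr{C}^\times$ the invertible elements); a path $x|y$ is $\mathscr{S}$-greedy if for all $s\in\mathscr{S}$ and $c$ with $\mathfrak{t}(c)=\mathfrak{s}(x)$, $s$ left-divides $cxy$ implies $s$ left-divides $cx$; a path $x_1|\dots|x_r$ is $\mathscr{S}$-normal if all $x_i|x_{i+1}$ are $\mathscr{S}$-greedy and all $x_i\in\mathscr{S}^\sharp$; $\mathscr{S}$ is a Garside family if every element of $\mathscr{C}$ is a product $x_1\cdots x_r$ with $x_1|\dots|x_r$ $\mathscr{S}$-normal. *)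

theory Defs
  imports Complex_Main
begin

text \<open>A quiver-theoretic map sigma on composable pairs is given as a function on pairs;
  x \<rightharpoonup> y = fst (sigma (x,y)), x \<leftharpoonup> y = snd (sigma (x,y)).\<close>

definition quiver :: "'v set \<Rightarrow> 'a set \<Rightarrow> ('a \<Rightarrow> 'v) \<Rightarrow> ('a \<Rightarrow> 'v) \<Rightarrow> bool" where
  "quiver L A s t \<longleftrightarrow> (\<forall>x\<in>A. s x \<in> L \<and> t x \<in> L)"

definition lact :: "('a \<times> 'a \<Rightarrow> 'a \<times> 'a) \<Rightarrow> 'a \<Rightarrow> 'a \<Rightarrow> 'a" where
  "lact \<sigma> x y = fst (\<sigma> (x, y))"

definition ract :: "('a \<times> 'a \<Rightarrow> 'a \<times> 'a) \<Rightarrow> 'a \<Rightarrow> 'a \<Rightarrow> 'a" where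
  "ract \<sigma> x y = snd (\<sigma> (x, y))"

definition composable_pair :: "'a set \<Rightarrow> ('a \<Rightarrow> 'v) \<Rightarrow> ('a \<Rightarrow> 'v) \<Rightarrow> 'a \<Rightarrow> 'a \<Rightarrow> bool" where
  "composable_pair A s t x y \<longleftrightarrow> x \<in> A \<and> y \<in> A \<and> t x = s y"

definition quiver_morphism2 ::
  "'a set \<Rightarrow> ('a \<Rightarrow> 'v) \<Rightarrow> ('a \<Rightarrow> 'v) \<Rightarrow> ('a \<times> 'a \<Rightarrow> 'a \<times> 'a) \<Rightarrow> bool" where
  "quiver_morphism2 A s t \<sigma> \<longleftrightarrow>
     (\<forall>x y. composable_pair A s t x y \<longrightarrow>
        composable_pair A s t (lact \<sigma> x y) (ract \<sigma> x y) \<and>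
        s (lact \<sigma> x y) = s x \<and> t (ract \<sigma> x y) = t y)"

definition sigma12 :: "('a \<times> 'a \<Rightarrow> 'a \<times> 'a) \<Rightarrow> 'a \<times> 'a \<times> 'a \<Rightarrow> 'a \<times> 'a \<times> 'a" where
  "sigma12 \<sigma> p = (case p of (x, y, z) \<Rightarrow> (lact \<sigma> x y, ract \<sigma> x y, z))"

definition sigma23 :: "('a \<times> 'a \<Rightarrow> 'a \<times> 'a) \<Rightarrow> 'a \<times> 'a \<times> 'a \<Rightarrow> 'a \<times> 'a \<times> 'a" where
  "sigma23 \<sigma> p = (case p of (x, y, z) \<Rightarrow> (x, lact \<sigma> y z, ract \<sigma> y z))"

definition yang_baxter_map ::
  "'v set \<Rightarrow> 'a set \<Rightarrow> ('a \<Rightarrow> 'v) \<Rightarrow> ('a \<Rightarrow> 'v) \<Rightarrow> ('a \<times> 'a \<Rightarrow> 'a \<times> 'a) \<Rightarrow> bool" where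
  "yang_baxter_map L A s t \<sigma> \<longleftrightarrow>
     quiver L A s t \<and> quiver_morphism2 A s t \<sigma> \<and>
     (\<forall>x y z. composable_pair A s t x y \<and> composable_pair A s t y z \<longrightarrow>
        sigma12 \<sigma> (sigma23 \<sigma> (sigma12 \<sigma> (x, y, z))) =
        sigma23 \<sigma> (sigma12 \<sigma> (sigma23 \<sigma> (x, y, z))))"

definition involutive ::
  "'a set \<Rightarrow> ('a \<Rightarrow> 'v) \<Rightarrow> ('a \<Rightarrow> 'v) \<Rightarrow> ('a \<times> 'a \<Rightarrow> 'a \<times> 'a) \<Rightarrow> bool" where
  "involutive A s t \<sigma> \<longleftrightarrow> (\<forall>x y. composable_pair A s t x y \<longrightarrow> \<sigma> (\<sigma> (x, y)) = (x, y))"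

definition out_arrows :: "'a set \<Rightarrow> ('a \<Rightarrow> 'v) \<Rightarrow> 'v \<Rightarrow> 'a set" where
  "out_arrows A s v = {y \<in> A. s y = v}"

definition left_nondegenerate ::
  "'a set \<Rightarrow> ('a \<Rightarrow> 'v) \<Rightarrow> ('a \<Rightarrow> 'v) \<Rightarrow> ('a \<times> 'a \<Rightarrow> 'a \<times> 'a) \<Rightarrow> bool" where
  "left_nondegenerate A s t \<sigma> \<longleftrightarrow>
     (\<forall>x\<in>A. bij_betw (lact \<sigma> x) (out_arrows A s (t x)) (out_arrows A s (s x)))"

definition star_op ::
  "'a set \<Rightarrow> ('a \<Rightarrow> 'v) \<Rightarrow> ('a \<Rightarrow> 'v) \<Rightarrow> ('a \<times> 'a \<Rightarrow> 'a \<times> 'a) \<Rightarrow> 'a \<Rightarrow> 'a \<Rightarrow> 'a" where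
  "star_op A s t \<sigma> x y = the_inv_into (out_arrows A s (t x)) (lact \<sigma> x) y"

text \<open>A path is a pair (v, xs): a start vertex v and a list of composable arrows starting at v
  (the empty list gives the empty path at v).\<close>
definition valid_path :: "'v set \<Rightarrow> 'a set \<Rightarrow> ('a \<Rightarrow> 'v) \<Rightarrow> ('a \<Rightarrow> 'v) \<Rightarrow> 'v \<times> 'a list \<Rightarrow> bool" where
  "valid_path L A s t P \<longleftrightarrow> fst P \<in> L \<and> set (snd P) \<subseteq> A \<and>
     (snd P \<noteq> [] \<longrightarrow> s (hd (snd P)) = fst P) \<and>
     (\<forall>i. Suc i < length (snd P) \<longrightarrow> t (snd P ! i) = s (snd P ! Suc i))"

definition path_tgt :: "('a \<Rightarrow> 'v) \<Rightarrow> 'v \<times> 'a list \<Rightarrow> 'v" where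
  "path_tgt t P = (if snd P = [] then fst P else t (last (snd P)))"

definition sigma_step ::
  "'a set \<Rightarrow> ('a \<Rightarrow> 'v) \<Rightarrow> ('a \<Rightarrow> 'v) \<Rightarrow> ('a \<times> 'a \<Rightarrow> 'a \<times> 'a) \<Rightarrow>
   'v \<times> 'a list \<Rightarrow> 'v \<times> 'a list \<Rightarrow> bool" where
  "sigma_step A s t \<sigma> P Q \<longleftrightarrow> fst P = fst Q \<and>
     (\<exists>p q x y. composable_pair A s t x y \<and> snd P = p @ [x, y] @ q \<and>
                snd Q = p @ [lact \<sigma> x y, ract \<sigma> x y] @ q)"

definition path_equiv ::
  "'a set \<Rightarrow> ('a \<Rightarrow> 'v) \<Rightarrow> ('a \<Rightarrow> 'v) \<Rightarrow> ('a \<times> 'a \<Rightarrow> 'a \<times> 'a) \<Rightarrow>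
   'v \<times> 'a list \<Rightarrow> 'v \<times> 'a list \<Rightarrow> bool" where
  "path_equiv A s t \<sigma> = (symclp (sigma_step A s t \<sigma>))\<^sup>*\<^sup>*"

definition path_class ::
  "'a set \<Rightarrow> ('a \<Rightarrow> 'v) \<Rightarrow> ('a \<Rightarrow> 'v) \<Rightarrow> ('a \<times> 'a \<Rightarrow> 'a \<times> 'a) \<Rightarrow>
   'v \<times> 'a list \<Rightarrow> ('v \<times> 'a list) set" where
  "path_class A s t \<sigma> P = {Q. path_equiv A s t \<sigma> P Q}"

text \<open>Small categories given by morphisms, objects, source, target, (left-to-right) composition
  and identities.\<close>
record ('o, 'm) cat =
  cmor :: "'m set"
  cobj :: "'o set"
  csrc :: "'m \<Rightarrow> 'o"
  ctgt :: "'m \<Rightarrow> 'o"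
  cmul :: "'m \<Rightarrow> 'm \<Rightarrow> 'm"
  cid :: "'o \<Rightarrow> 'm"

definition structure_cat ::
  "'v set \<Rightarrow> 'a set \<Rightarrow> ('a \<Rightarrow> 'v) \<Rightarrow> ('a \<Rightarrow> 'v) \<Rightarrow> ('a \<times> 'a \<Rightarrow> 'a \<times> 'a) \<Rightarrow>
   ('v, ('v \<times> 'a list) set) cat" where
  "structure_cat L A s t \<sigma> =
    \<lparr> cmor = {path_class A s t \<sigma> P | P. valid_path L A s t P},
      cobj = L,
      csrc = (\<lambda>c. fst (SOME P. P \<in> c)),
      ctgt = (\<lambda>c. path_tgt t (SOME P. P \<in> c)),
      cmul = (\<lambda>c d. path_class A s t \<sigma>
                 (fst (SOME P. P \<in> c), snd (SOME P. P \<in> c) @ snd (SOME Q. Q \<in> d))),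
      cid = (\<lambda>v. path_class A s t \<sigma> (v, [])) \<rparr>"

definition jmap ::
  "'a set \<Rightarrow> ('a \<Rightarrow> 'v) \<Rightarrow> ('a \<Rightarrow> 'v) \<Rightarrow> ('a \<times> 'a \<Rightarrow> 'a \<times> 'a) \<Rightarrow> 'a \<Rightarrow> ('v \<times> 'a list) set" where
  "jmap A s t \<sigma> x = path_class A s t \<sigma> (s x, [x])"

definition composable :: "('o, 'm, 'z) cat_scheme \<Rightarrow> 'm \<Rightarrow> 'm \<Rightarrow> bool" where
  "composable C x y \<longleftrightarrow> ctgt C x = csrc C y"

definition invertible :: "('o, 'm, 'z) cat_scheme \<Rightarrow> 'm \<Rightarrow> bool" where
  "invertible C x \<longleftrightarrow> x \<in> cmor C \<and>
     (\<exists>y\<in>cmor C. composable C x y \<and> composable C y x \<and>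
        cmul C x y = cid C (csrc C x) \<and> cmul C y x = cid C (ctgt C x))"

definition is_identity :: "('o, 'm, 'z) cat_scheme \<Rightarrow> 'm \<Rightarrow> bool" where
  "is_identity C x \<longleftrightarrow> (\<exists>v\<in>cobj C. x = cid C v)"

definition left_divides :: "('o, 'm, 'z) cat_scheme \<Rightarrow> 'm \<Rightarrow> 'm \<Rightarrow> bool" where
  "left_divides C x y \<longleftrightarrow> x \<in> cmor C \<and> y \<in> cmor C \<and>
     (\<exists>z\<in>cmor C. composable C x z \<and> y = cmul C x z)"

definition common_right_multiple :: "('o, 'm, 'z) cat_scheme \<Rightarrow> 'm \<Rightarrow> 'm \<Rightarrow> 'm \<Rightarrow> bool" where
  "common_right_multiple C x y m \<longleftrightarrow> left_divides C x m \<and> left_divides C y m"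

definition is_right_lcm :: "('o, 'm, 'z) cat_scheme \<Rightarrow> 'm \<Rightarrow> 'm \<Rightarrow> 'm \<Rightarrow> bool" where
  "is_right_lcm C x y m \<longleftrightarrow> common_right_multiple C x y m \<and>
     (\<forall>w. common_right_multiple C x y w \<longrightarrow> left_divides C m w)"

definition left_cancellative :: "('o, 'm, 'z) cat_scheme \<Rightarrow> bool" where
  "left_cancellative C \<longleftrightarrow> (\<forall>x\<in>cmor C. \<forall>y\<in>cmor C. \<forall>z\<in>cmor C.
     composable C x y \<and> composable C x z \<and> cmul C x y = cmul C x z \<longrightarrow> y = z)"

definition unique_conditional_right_lcms :: "('o, 'm, 'z) cat_scheme \<Rightarrow> bool" where
  "unique_conditional_right_lcms C \<longleftrightarrow> (\<forall>x\<in>cmor C. \<forall>y\<in>cmor C.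
     (\<exists>m. common_right_multiple C x y m) \<longrightarrow> (\<exists>!m. is_right_lcm C x y m))"

definition proper_factor :: "('o, 'm, 'z) cat_scheme \<Rightarrow> 'm \<Rightarrow> 'm \<Rightarrow> bool" where
  "proper_factor C x y \<longleftrightarrow> x \<in> cmor C \<and> y \<in> cmor C \<and>
     (\<exists>y'\<in>cmor C. \<exists>y''\<in>cmor C. composable C y' x \<and> composable C x y'' \<and>
        y = cmul C (cmul C y' x) y'' \<and> (\<not> invertible C y' \<or> \<not> invertible C y''))"

definition noetherian :: "('o, 'm, 'z) cat_scheme \<Rightarrow> bool" where
  "noetherian C \<longleftrightarrow> wfp (proper_factor C)"

definition is_chain :: "('o, 'm, 'z) cat_scheme \<Rightarrow> 'm list \<Rightarrow> bool" where
  "is_chain C xs \<longleftrightarrow> set xs \<subseteq> cmor C \<and>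
     (\<forall>i. Suc i < length xs \<longrightarrow> composable C (xs ! i) (xs ! Suc i))"

definition list_prod :: "('o, 'm, 'z) cat_scheme \<Rightarrow> 'm list \<Rightarrow> 'm" where
  "list_prod C xs = foldl (cmul C) (hd xs) (tl xs)"

definition atom :: "('o, 'm, 'z) cat_scheme \<Rightarrow> 'm \<Rightarrow> bool" where
  "atom C x \<longleftrightarrow> x \<in> cmor C \<and>
     (\<forall>xs. xs \<noteq> [] \<and> is_chain C xs \<and> list_prod C xs = x \<longrightarrow>
        length (filter (\<lambda>y. \<not> invertible C y) xs) = 1)"

definition sharp :: "('o, 'm, 'z) cat_scheme \<Rightarrow> 'm set \<Rightarrow> 'm set" where
  "sharp C S = {cmul C x e | x e. x \<in> S \<and> invertible C e \<and> composable C x e}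
               \<union> {e. invertible C e}"

definition greedy :: "('o, 'm, 'z) cat_scheme \<Rightarrow> 'm set \<Rightarrow> 'm \<Rightarrow> 'm \<Rightarrow> bool" where
  "greedy C S x y \<longleftrightarrow> (\<forall>u\<in>S. \<forall>c\<in>cmor C. composable C c x \<longrightarrow>
     left_divides C u (cmul C (cmul C c x) y) \<longrightarrow> left_divides C u (cmul C c x))"

definition normal_path :: "('o, 'm, 'z) cat_scheme \<Rightarrow> 'm set \<Rightarrow> 'm list \<Rightarrow> bool" where
  "normal_path C S xs \<longleftrightarrow> is_chain C xs \<and> set xs \<subseteq> sharp C S \<and>
     (\<forall>i. Suc i < length xs \<longrightarrow> greedy C S (xs ! i) (xs ! Suc i))"

definition garside_family :: "('o, 'm, 'z) cat_scheme \<Rightarrow> 'm set \<Rightarrow> bool" where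
  "garside_family C S \<longleftrightarrow> S \<subseteq> cmor C \<and>
     (\<forall>x\<in>cmor C. \<exists>xs. xs \<noteq> [] \<and> normal_path C S xs \<and> list_prod C xs = x)"

inductive_set rlcm_closure :: "('o, 'm, 'z) cat_scheme \<Rightarrow> 'm set \<Rightarrow> 'm set"
  for C :: "('o, 'm, 'z) cat_scheme" and X :: "'m set" where
  base: "x \<in> X \<Longrightarrow> x \<in> rlcm_closure C X"
| lcm: "a \<in> rlcm_closure C X \<Longrightarrow> b \<in> rlcm_closure C X \<Longrightarrow> is_right_lcm C a b m \<Longrightarrow>
        m \<in> rlcm_closure C X"

definition star_step ::
  "'a set \<Rightarrow> ('a \<Rightarrow> 'v) \<Rightarrow> ('a \<Rightarrow> 'v) \<Rightarrow> ('a \<times> 'a \<Rightarrow> 'a \<times> 'a) \<Rightarrow>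
   'v \<times> 'a list \<Rightarrow> 'v \<times> 'a list \<Rightarrow> bool" where
  "star_step A s t \<sigma> P Q \<longleftrightarrow> fst P = fst Q \<and>
     (\<exists>p q x y. x \<in> A \<and> y \<in> A \<and> x \<noteq> y \<and> s x = s y \<and>
        snd P = p @ [x, star_op A s t \<sigma> x y] @ q \<and>
        snd Q = p @ [y, star_op A s t \<sigma> y x] @ q)"

end

theory Submission
  imports Defs
begin

locale YBM =
  fixes L :: "'v set" and A :: "'a set" and s t :: "'a \<Rightarrow> 'v"
    and \<sigma> :: "'a \<times> 'a \<Rightarrow> 'a \<times> 'a"
  assumes ybm: "yang_baxter_map L A s t \<sigma>"
    and inv: "involutive A s t \<sigma>"
    and lnd: "left_nondegenerate A s t \<sigma>"
begin

abbreviation lam where "lam \<equiv> lact \<sigma>"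
abbreviation rho where "rho \<equiv> ract \<sigma>"
abbreviation st where "st \<equiv> star_op A s t \<sigma>"

lemma qv: "x \<in> A \<Longrightarrow> s x \<in> L \<and> t x \<in> L"
  using ybm unfolding yang_baxter_map_def quiver_def by blast

lemma qm:
  assumes "x \<in> A" "y \<in> A" "t x = s y"
  shows "lam x y \<in> A" "rho x y \<in> A" "t (lam x y) = s (rho x y)"
    "s (lam x y) = s x" "t (rho x y) = t y"
  using ybm assms unfolding yang_baxter_map_def quiver_morphism2_def composable_pair_def
  by blast+

lemma bij: "x \<in> A \<Longrightarrow> bij_betw (lam x) (out_arrows A s (t x)) (out_arrows A s (s x))"
  using lnd unfolding left_nondegenerate_def by blast

lemma st_props:
  assumes "x \<in> A" "y \<in> A" "s y = s x"
  shows "st x y \<in> A" "s (st x y) = t x" "lam x (st x y) = y"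
proof -
  have b: "bij_betw (lam x) (out_arrows A s (t x)) (out_arrows A s (s x))" using bij assms by blast
  have y: "y \<in> out_arrows A s (s x)" using assms unfolding out_arrows_def by blast
  have "st x y \<in> out_arrows A s (t x)"
    unfolding star_op_def using the_inv_into_into[OF bij_betw_imp_inj_on[OF b]] b y
    by (metis bij_betw_def order_refl)
  then show "st x y \<in> A" "s (st x y) = t x" unfolding out_arrows_def by auto
  show "lam x (st x y) = y"
    unfolding star_op_def using f_the_inv_into_f[OF bij_betw_imp_inj_on[OF b]] b y
    by (metis bij_betw_def)
qed

lemma st_lam:
  assumes "x \<in> A" "b \<in> A" "s b = t x"
  shows "st x (lam x b) = b"
proof -
  have b: "bij_betw (lam x) (out_arrows A s (t x)) (out_arrows A s (s x))" using bij assms by blast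
  have "b \<in> out_arrows A s (t x)" using assms unfolding out_arrows_def by blast
  then show ?thesis unfolding star_op_def
    using the_inv_into_f_f[OF bij_betw_imp_inj_on[OF b]] by blast
qed

lemma lam_inj:
  assumes "x \<in> A" "b \<in> A" "s b = t x" "b' \<in> A" "s b' = t x" "lam x b = lam x b'"
  shows "b = b'"
  using st_lam assms by metis

lemma invol:
  assumes "x \<in> A" "b \<in> A" "t x = s b"
  shows "lam (lam x b) (rho x b) = x" "rho (lam x b) (rho x b) = b"
proof -
  have "\<sigma> (\<sigma> (x, b)) = (x, b)" using inv assms unfolding involutive_def composable_pair_def by blast
  moreover have "\<sigma> (x, b) = (lam x b, rho x b)" unfolding lact_def ract_def by simp
  ultimately show "lam (lam x b) (rho x b) = x" "rho (lam x b) (rho x b) = b"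
    unfolding lact_def ract_def by (metis fst_conv, metis snd_conv)
qed

lemma rho_st:
  assumes "x \<in> A" "y \<in> A" "s y = s x"
  shows "rho x (st x y) = st y x"
proof -
  note S = st_props[OF assms]
  have r: "rho x (st x y) \<in> A" "s (rho x (st x y)) = t y"
    using qm[OF assms(1) S(1)] S by auto
  have "lam y (rho x (st x y)) = x" using invol[OF assms(1) S(1)] S by auto
  then show ?thesis using st_lam[OF assms(2) r] by simp
qed

lemma t_st:
  assumes "x \<in> A" "y \<in> A" "s y = s x"
  shows "t (st x y) = t (st y x)"
proof -
  note S = st_props[OF assms]
  show ?thesis using qm(5)[OF assms(1) S(1)] S rho_st[OF assms] by auto
qed

lemma YB1:
  assumes "x \<in> A" "y \<in> A" "z \<in> A" "t x = s y" "t y = s z"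
  shows "lam x (lam y z) = lam (lam x y) (lam (rho x y) z)"
proof -
  have "sigma12 \<sigma> (sigma23 \<sigma> (sigma12 \<sigma> (x, y, z))) =
        sigma23 \<sigma> (sigma12 \<sigma> (sigma23 \<sigma> (x, y, z)))"
    using ybm assms unfolding yang_baxter_map_def composable_pair_def by blast
  then show ?thesis unfolding sigma12_def sigma23_def prod.case prod.inject by (elim conjE) (erule sym)
qed

lemma cyc:
  assumes "x \<in> A" "y \<in> A" "z \<in> A" "s y = s x" "s z = s x"
  shows "st (st x y) (st x z) = st (st y x) (st y z)"
proof -
  obtain a where a_def: "a = st x y" by blast
  obtain b where b_def: "b = st x z" by blast
  obtain c where c_def: "c = st a b" by blast
  have Sa: "a \<in> A" "s a = t x" "lam x a = y" using st_props[OF assms(1,2,4)] a_def by auto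
  have Sb: "b \<in> A" "s b = t x" "lam x b = z" using st_props[OF assms(1,3,5)] b_def by auto
  have sba: "s b = s a" using Sa Sb by simp
  have Sc: "c \<in> A" "s c = t a" "lam a c = b" using st_props[OF Sa(1) Sb(1) sba] c_def by auto
  have Syx: "st y x \<in> A" "s (st y x) = t y" "lam y (st y x) = x"
    using st_props[OF assms(2,1) assms(4)[symmetric]] by auto
  have ra: "rho x a = st y x" using rho_st[OF assms(1,2,4)] a_def by simp
  have "lam x (lam a c) = lam (lam x a) (lam (rho x a) c)"
    using YB1[OF assms(1) Sa(1) Sc(1) Sa(2)[symmetric] Sc(2)[symmetric]] .
  then have e: "lam y (lam (st y x) c) = z" unfolding Sc(3) Sb(3) Sa(3) ra by (rule sym)
  have tt: "t (st y x) = s c" using qm(5)[OF assms(1) Sa(1) Sa(2)[symmetric]] Sc(2) ra by simp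
  have d: "lam (st y x) c \<in> A" "s (lam (st y x) c) = t y"
    using qm[OF Syx(1) Sc(1) tt] Syx(2) by auto
  have "st y z = lam (st y x) c" using st_lam[OF assms(2) d] e by simp
  then have "st (st y x) (st y z) = c" using st_lam[OF Syx(1) Sc(1) tt[symmetric]] by simp
  then show ?thesis using c_def a_def b_def by simp
qed

lemma st_inj:
  assumes "x \<in> A" "y \<in> A" "z \<in> A" "s y = s x" "s z = s x" "st x y = st x z"
  shows "y = z"
  using st_props[OF assms(1,2,4)] st_props[OF assms(1,3,5)] assms(6) by metis

end

context YBM
begin

fun ch :: "'a list \<Rightarrow> bool" where
  "ch [] = True"
| "ch [x] = (x \<in> A)"
| "ch (x # y # zs) = (x \<in> A \<and> t x = s y \<and> ch (y # zs))"

lemma ch_Cons: "ch (x # xs) \<longleftrightarrow> x \<in> A \<and> ch xs \<and> (xs \<noteq> [] \<longrightarrow> t x = s (hd xs))"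
  by (cases xs) auto

lemma ch_append: "ch (xs @ ys) \<longleftrightarrow> ch xs \<and> ch ys \<and> (xs \<noteq> [] \<and> ys \<noteq> [] \<longrightarrow> t (last xs) = s (hd ys))"
  by (induction xs rule: ch.induct) (auto simp: ch_Cons)

lemma ch_set: "ch xs \<Longrightarrow> set xs \<subseteq> A"
  by (induction xs rule: ch.induct) auto

lemma ch_nth: "ch xs \<longleftrightarrow> set xs \<subseteq> A \<and> (\<forall>i. Suc i < length xs \<longrightarrow> t (xs ! i) = s (xs ! Suc i))"
proof (induction xs rule: ch.induct)
  case (3 x y zs)
  have "(\<forall>i. Suc i < length (x # y # zs) \<longrightarrow> t ((x # y # zs) ! i) = s ((x # y # zs) ! Suc i))
     \<longleftrightarrow> t x = s y \<and> (\<forall>i. Suc i < length (y # zs) \<longrightarrow> t ((y # zs) ! i) = s ((y # zs) ! Suc i))"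
    (is "?l \<longleftrightarrow> ?r")
  proof
    assume ?l
    then show ?r by (metis Suc_less_eq length_Cons nth_Cons_0 nth_Cons_Suc zero_less_Suc)
  next
    assume r: ?r
    show ?l
    proof (intro allI impI)
      fix i assume "Suc i < length (x # y # zs)"
      then show "t ((x # y # zs) ! i) = s ((x # y # zs) ! Suc i)"
        using r by (cases i) auto
    qed
  qed
  then show ?case using 3 by auto
qed auto

definition vch :: "'v \<Rightarrow> 'a list \<Rightarrow> bool" where
  "vch v xs \<longleftrightarrow> ch xs \<and> (xs \<noteq> [] \<longrightarrow> s (hd xs) = v)"

definition ptgt :: "'v \<Rightarrow> 'a list \<Rightarrow> 'v" where
  "ptgt v xs = (if xs = [] then v else t (last xs))"

lemma ptgt_append[simp]: "ptgt v (xs @ ys) = ptgt (ptgt v xs) ys"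
  unfolding ptgt_def by auto

lemma ptgt_Nil[simp]: "ptgt v [] = v" unfolding ptgt_def by simp
lemma ptgt_Cons[simp]: "ptgt v (x # xs) = ptgt (t x) xs" unfolding ptgt_def by simp

lemma vch_Nil[simp]: "vch v []" unfolding vch_def by simp

lemma vch_Cons: "vch v (x # xs) \<longleftrightarrow> x \<in> A \<and> s x = v \<and> vch (t x) xs"
  unfolding vch_def using ch_Cons by auto

lemma vch_append: "vch v (xs @ ys) \<longleftrightarrow> vch v xs \<and> vch (ptgt v xs) ys"
  by (induction xs arbitrary: v) (auto simp: vch_Cons)

lemma valid_path_iff: "valid_path L A s t (v, xs) \<longleftrightarrow> v \<in> L \<and> vch v xs"
  unfolding valid_path_def vch_def using ch_nth by auto

lemma path_tgt_eq: "path_tgt t (v, xs) = ptgt v xs"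
  unfolding path_tgt_def ptgt_def by simp

lemma ptgt_L: "v \<in> L \<Longrightarrow> vch v xs \<Longrightarrow> ptgt v xs \<in> L"
  by (induction xs arbitrary: v) (auto simp: vch_Cons qv)

definition lstep :: "'a list \<Rightarrow> 'a list \<Rightarrow> bool" where
  "lstep xs ys \<longleftrightarrow> (\<exists>p q x y. x \<in> A \<and> y \<in> A \<and> t x = s y \<and> xs = p @ [x, y] @ q \<and>
                ys = p @ [lam x y, rho x y] @ q)"

definition leq :: "'a list \<Rightarrow> 'a list \<Rightarrow> bool" where
  "leq = (symclp lstep)\<^sup>*\<^sup>*"

lemma leq_equivp: "equivp leq"
  unfolding leq_def by simp

lemma leq_refl[simp]: "leq xs xs"
  using leq_equivp equivp_reflp by metis

lemma leq_sym: "leq xs ys \<Longrightarrow> leq ys xs"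
  using leq_equivp equivp_symp by metis

lemma leq_trans[trans]: "leq xs ys \<Longrightarrow> leq ys zs \<Longrightarrow> leq xs zs"
  using leq_equivp equivp_transp by metis

lemma lstep_leq: "lstep xs ys \<Longrightarrow> leq xs ys"
  unfolding leq_def by (simp add: r_into_rtranclp symclpI1)

lemma lstep_cong: "lstep xs ys \<Longrightarrow> lstep (p @ xs @ q) (p @ ys @ q)"
  unfolding lstep_def by (metis append.assoc)

lemma leq_cong: "leq xs ys \<Longrightarrow> leq (p @ xs @ q) (p @ ys @ q)"
  unfolding leq_def
proof (induction rule: rtranclp_induct)
  case (step y z)
  then have "symclp lstep (p @ y @ q) (p @ z @ q)"
    by (auto elim!: symclpE intro: lstep_cong symclpI1 symclpI2)
  with step show ?case by (meson rtranclp.rtrancl_into_rtrancl)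
qed simp

lemma leq_Cons: "leq xs ys \<Longrightarrow> leq (a # xs) (a # ys)"
  using leq_cong[of xs ys "[a]" "[]"] by simp

lemma leq_app_left: "leq xs ys \<Longrightarrow> leq (p @ xs) (p @ ys)"
  using leq_cong[of xs ys p "[]"] by simp

lemma leq_app_right: "leq xs ys \<Longrightarrow> leq (xs @ q) (ys @ q)"
  using leq_cong[of xs ys "[]" q] by simp

lemma leq_app: "leq xs ys \<Longrightarrow> leq xs' ys' \<Longrightarrow> leq (xs @ xs') (ys @ ys')"
  using leq_app_left leq_app_right leq_trans by blast

lemma leq_inv:
  assumes "\<And>x y. lstep x y \<Longrightarrow> f x = f y" and "leq x y"
  shows "f x = f y"
  using assms(2) unfolding leq_def
  by (induction rule: rtranclp_induct) (auto elim!: symclpE dest: assms(1))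

lemma lstep_length: "lstep xs ys \<Longrightarrow> length xs = length ys"
  unfolding lstep_def by auto

lemma leq_length: "leq xs ys \<Longrightarrow> length xs = length ys"
  using leq_inv[of length] lstep_length by blast

lemma lstep_ptgt: "lstep xs ys \<Longrightarrow> ptgt v xs = ptgt v ys"
  unfolding lstep_def ptgt_def by (auto simp: last_append qm(5) split: if_splits)

lemma leq_ptgt: "leq xs ys \<Longrightarrow> ptgt v xs = ptgt v ys"
  using leq_inv[of "ptgt v"] lstep_ptgt by blast

lemma lstep_vch: "lstep xs ys \<Longrightarrow> vch v xs = vch v ys"
  unfolding lstep_def
proof (elim exE conjE)
  fix p q x y assume a: "x \<in> A" "y \<in> A" "t x = s y" "xs = p @ [x, y] @ q"
    "ys = p @ [lam x y, rho x y] @ q"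
  have "vch w [x, y] = vch w [lam x y, rho x y]" for w
    using qm[OF a(1-3)] a by (auto simp: vch_Cons)
  moreover have "ptgt w [x, y] = ptgt w [lam x y, rho x y]" for w
    using qm[OF a(1-3)] by simp
  ultimately show ?thesis using a(4,5) by (simp only: vch_append)
qed

lemma leq_vch: "leq xs ys \<Longrightarrow> vch v xs = vch v ys"
  using leq_inv[of "vch v"] lstep_vch by blast

lemma vch_ch: "ch xs \<longleftrightarrow> vch (s (hd xs)) xs"
  unfolding vch_def by auto

lemma leq_hd: "leq (x # xs) (y # ys) \<Longrightarrow> ch (x # xs) \<Longrightarrow> s y = s x"
proof -
  assume a: "leq (x # xs) (y # ys)" "ch (x # xs)"
  have "vch (s x) (x # xs)" using a(2) vch_ch by (metis list.sel(1))
  then have "vch (s x) (y # ys)" using leq_vch[OF a(1)] by simp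
  then show ?thesis by (simp add: vch_Cons)
qed

lemma leq_ch: "leq xs ys \<Longrightarrow> ch xs \<Longrightarrow> ch ys"
proof -
  assume a: "leq xs ys" "ch xs"
  then have "vch (s (hd xs)) ys" using leq_vch vch_ch by blast
  then show "ch ys" unfolding vch_def by simp
qed

lemma swap:
  assumes "a \<in> A" "b \<in> A" "s b = s a"
  shows "leq (a # st a b # q) (b # st b a # q)"
proof -
  note S = st_props[OF assms]
  have "lstep (a # st a b # q) (lam a (st a b) # rho a (st a b) # q)"
    unfolding lstep_def
    by (rule exI[of _ "[]"], rule exI[of _ q], rule exI[of _ a], rule exI[of _ "st a b"])
       (use S assms in auto)
  then show ?thesis using S rho_st[OF assms] by (simp add: lstep_leq)
qed

end

context YBM
begin

definition Rel :: "'a \<Rightarrow> 'a list \<Rightarrow> 'a \<Rightarrow> 'a list \<Rightarrow> bool" where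
  "Rel x u y v \<longleftrightarrow> (x = y \<longrightarrow> leq u v) \<and>
     (x \<noteq> y \<longrightarrow> (\<exists>w. leq u (st x y # w) \<and> leq v (st y x # w)))"

lemma Rel_sym: "Rel x u y v \<Longrightarrow> Rel y v x u"
  unfolding Rel_def using leq_sym by metis

lemma Rel_step:
  assumes c: "ch (x # u)" and l: "lstep (x # u) (y # v)"
  shows "Rel x u y v"
proof -
  obtain p q a b where ab: "a \<in> A" "b \<in> A" "t a = s b" "x # u = p @ [a, b] @ q"
    "y # v = p @ [lam a b, rho a b] @ q"
    using l unfolding lstep_def by blast
  show ?thesis
  proof (cases p)
    case Nil
    then have e: "x = a" "u = b # q" "y = lam a b" "v = rho a b # q" using ab by auto
    note Q = qm[OF ab(1-3)]
    show ?thesis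
    proof (cases "y = x")
      case True
      then have la: "lam a b = a" using e by simp
      have "lam a (rho a b) = a" using invol[OF ab(1-3)] la by simp
      then have eq: "lam a (rho a b) = lam a b" using la by simp
      have r1: "s (rho a b) = t a" using Q(3) la by simp
      have "rho a b = b" by (rule lam_inj[OF ab(1) Q(2) r1 ab(2) ab(3)[symmetric] eq])
      then show ?thesis unfolding Rel_def using e la by simp
    next
      case False
      have sxy: "st x y = b" using st_lam[OF ab(1,2) ab(3)[symmetric]] e by simp
      have "rho a (st a (lam a b)) = st (lam a b) a" using rho_st[OF ab(1) Q(1) Q(4)] .
      then have "rho a b = st y x" using st_lam[OF ab(1,2) ab(3)[symmetric]] e by simp
      then have "leq u (st x y # q)" "leq v (st y x # q)" using e sxy by simp_all
      then show ?thesis unfolding Rel_def using False by blast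
    qed
  next
    case (Cons c p')
    then have e: "x = c" "y = c" "u = p' @ [a, b] @ q" "v = p' @ [lam a b, rho a b] @ q"
      using ab by auto
    have "lstep u v" unfolding lstep_def e using ab(1-3) by blast
    then show ?thesis unfolding Rel_def using e lstep_leq by simp
  qed
qed

lemma Rel_trans:
  assumes IHK: "\<And>a b c d. length b < length v \<Longrightarrow> ch (a # b) \<Longrightarrow> leq (a # b) (c # d) \<Longrightarrow> Rel a b c d"
    and cx: "ch (x # u)" and cy: "ch (y # v)" and cz: "ch (z # w)"
    and sy: "s y = s x" and sz: "s z = s x"
    and r1: "Rel x u y v" and r2: "Rel y v z w"
  shows "Rel x u z w"
proof -
  have xA: "x \<in> A" and yA: "y \<in> A" and zA: "z \<in> A" using cx cy cz by (auto simp: ch_Cons)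
  have chv: "ch v" using cy by (simp add: ch_Cons)
  show ?thesis
  proof (cases "x = y")
    case True
    then have uv: "leq u v" using r1 unfolding Rel_def by simp
    show ?thesis
    proof (cases "y = z")
      case True
      then have "leq v w" using r2 unfolding Rel_def by simp
      then have "leq u w" using uv by (rule leq_trans[rotated])
      then show ?thesis using True \<open>x = y\<close> unfolding Rel_def by simp
    next
      case False
      then obtain w0 where "leq v (st y z # w0)" "leq w (st z y # w0)"
        using r2 unfolding Rel_def by blast
      moreover have "leq u (st y z # w0)" using uv calculation(1) by (rule leq_trans)
      ultimately show ?thesis using False \<open>x = y\<close> unfolding Rel_def by blast
    qed
  next
    case xy: False
    then obtain w1 where w1: "leq u (st x y # w1)" "leq v (st y x # w1)"
      using r1 unfolding Rel_def by blast
    show ?thesis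
    proof (cases "y = z")
      case True
      then have "leq v w" using r2 unfolding Rel_def by simp
      have "leq w (st y x # w1)" using leq_sym[OF \<open>leq v w\<close>] w1(2) by (rule leq_trans)
      then show ?thesis using w1(1) True xy unfolding Rel_def by blast
    next
      case yz: False
      then obtain w2 where w2: "leq v (st y z # w2)" "leq w (st z y # w2)"
        using r2 unfolding Rel_def by blast
      have l12: "leq (st y x # w1) (st y z # w2)" using leq_sym[OF w1(2)] w2(1) by (rule leq_trans)
      have ch1: "ch (st y x # w1)" using leq_ch[OF w1(2) chv] .
      have len: "length w1 < length v" using leq_length[OF w1(2)] by simp
      have R: "Rel (st y x) w1 (st y z) w2" using IHK[OF len ch1 l12] .
      show ?thesis
      proof (cases "x = z")
        case True
        then have "leq w1 w2" using R unfolding Rel_def by simp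
        then have l3: "leq (st x y # w1) (st z y # w2)" using True leq_Cons by simp
        have "leq u (st z y # w2)" using w1(1) l3 by (rule leq_trans)
        then have "leq u w" using leq_sym[OF w2(2)] by (rule leq_trans)
        then show ?thesis using True unfolding Rel_def by simp
      next
        case xz: False
        have "st y x \<noteq> st y z" using st_inj[OF yA xA zA] sy sz xz by auto
        then obtain w4 where w4: "leq w1 (st (st y x) (st y z) # w4)" "leq w2 (st (st y z) (st y x) # w4)"
          using R unfolding Rel_def by blast
        have sxy: "st x y \<in> A" "s (st x y) = t x" using st_props[OF xA yA sy] by auto
        have sxz: "st x z \<in> A" "s (st x z) = t x" using st_props[OF xA zA sz] by auto
        have szy: "st z y \<in> A" "s (st z y) = t z" using st_props[OF zA yA] sy sz by auto
        have szx: "st z x \<in> A" "s (st z x) = t z" using st_props[OF zA xA] sz by auto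
        have c1: "st (st x y) (st x z) = st (st y x) (st y z)" using cyc[OF xA yA zA sy sz] .
        have c2: "st (st x z) (st x y) = st (st z x) (st z y)" using cyc[OF xA zA yA sz sy] .
        have c3: "st (st z y) (st z x) = st (st y z) (st y x)" proof -
          have "s y = s z" "s x = s z" using sy sz by simp_all
          then show ?thesis using cyc[OF zA yA xA] by blast
        qed
        have "leq u (st x y # st (st y x) (st y z) # w4)" using w1(1) leq_Cons[OF w4(1)] by (rule leq_trans)
        also have "st x y # st (st y x) (st y z) # w4 = st x y # st (st x y) (st x z) # w4" using c1 by simp
        also have "leq \<dots> (st x z # st (st x z) (st x y) # w4)" using swap[OF sxy(1) sxz(1)] sxy sxz by simp
        finally have U: "leq u (st x z # st (st z x) (st z y) # w4)" using c2 by simp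
        have "leq w (st z y # st (st y z) (st y x) # w4)" using w2(2) leq_Cons[OF w4(2)] by (rule leq_trans)
        also have "st z y # st (st y z) (st y x) # w4 = st z y # st (st z y) (st z x) # w4" using c3 by simp
        also have "leq \<dots> (st z x # st (st z x) (st z y) # w4)" using swap[OF szy(1) szx(1)] szy szx by simp
        finally have W: "leq w (st z x # st (st z x) (st z y) # w4)" .
        show ?thesis unfolding Rel_def using U W xz by blast
      qed
    qed
  qed
qed

lemma K:
  assumes "ch (x # u)" "leq (x # u) (y # v)"
  shows "Rel x u y v"
  using assms
proof (induction "length u" arbitrary: x u y v rule: less_induct)
  case less
  have IHK: "\<And>a b c d. length b < length u \<Longrightarrow> ch (a # b) \<Longrightarrow> leq (a # b) (c # d) \<Longrightarrow> Rel a b c d"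
    using less.hyps by blast
  have "(symclp lstep)\<^sup>*\<^sup>* (x # u) V \<Longrightarrow> V = y' # v' \<Longrightarrow> Rel x u y' v'" for V y' v'
  proof (induction V arbitrary: y' v' rule: rtranclp_induct)
    case base
    then show ?case unfolding Rel_def by simp
  next
    case (step V W)
    have lW: "length V = length W" using step.hyps(2) by (auto elim!: symclpE dest: lstep_length)
    then obtain y1 v1 where V: "V = y1 # v1" using step.prems by (cases V) auto
    have R1: "Rel x u y1 v1" using step.IH V by blast
    have lV: "leq (x # u) V" using step.hyps(1) unfolding leq_def .
    have lW': "leq (x # u) W" using step.hyps unfolding leq_def by (meson rtranclp.rtrancl_into_rtrancl)
    have chV: "ch V" using leq_ch[OF lV less.prems(1)] .
    have chW: "ch W" using leq_ch[OF lW' less.prems(1)] .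
    have R2: "Rel y1 v1 y' v'"
      using step.hyps(2)
    proof (cases rule: symclpE)
      case base then show ?thesis using Rel_step chV V step.prems by simp
    next
      case sym then show ?thesis using Rel_step chW V step.prems Rel_sym by simp
    qed
    have len: "length v1 = length u" using leq_length[OF lV] V by simp
    show ?case
      using Rel_trans[of v1 x u y1 y' v'] IHK len less.prems(1) chV chW V step.prems
        leq_hd[of x u y1 v1] leq_hd[of x u y' v'] lV lW' R1 R2 by simp
  qed
  then show ?case using less.prems(2) unfolding leq_def by blast
qed

lemma cancel1: "ch (x # u) \<Longrightarrow> leq (x # u) (x # v) \<Longrightarrow> leq u v"
  using K unfolding Rel_def by blast

lemma cancel: "ch (p @ u) \<Longrightarrow> leq (p @ u) (p @ v) \<Longrightarrow> leq u v"
proof (induction p)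
  case (Cons a p)
  then show ?case using cancel1[of a "p @ u" "p @ v"] by (simp add: ch_Cons)
qed simp

lemma Kdiff: "ch (x # u) \<Longrightarrow> leq (x # u) (y # v) \<Longrightarrow> x \<noteq> y \<Longrightarrow>
    \<exists>w. leq u (st x y # w) \<and> leq v (st y x # w)"
  using K unfolding Rel_def by blast

end

context YBM
begin

lemma sigma_step_iff: "sigma_step A s t \<sigma> P Q \<longleftrightarrow> fst P = fst Q \<and> lstep (snd P) (snd Q)"
  unfolding sigma_step_def lstep_def composable_pair_def by blast

lemma path_equiv_iff: "path_equiv A s t \<sigma> P Q \<longleftrightarrow> fst P = fst Q \<and> leq (snd P) (snd Q)"
proof
  assume "path_equiv A s t \<sigma> P Q"
  then show "fst P = fst Q \<and> leq (snd P) (snd Q)"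
    unfolding path_equiv_def
  proof (induction rule: rtranclp_induct)
    case (step y z)
    then have "fst y = fst z \<and> symclp lstep (snd y) (snd z)"
      by (auto elim!: symclpE simp: sigma_step_iff)
    then show ?case using step.IH unfolding leq_def
      by (metis rtranclp.rtrancl_into_rtrancl)
  qed simp
next
  assume a: "fst P = fst Q \<and> leq (snd P) (snd Q)"
  have "(symclp lstep)\<^sup>*\<^sup>* xs ys \<Longrightarrow> path_equiv A s t \<sigma> (v, xs) (v, ys)" for v xs ys
    unfolding path_equiv_def
  proof (induction rule: rtranclp_induct)
    case (step y z)
    then have "symclp (sigma_step A s t \<sigma>) (v, y) (v, z)"
      by (auto elim!: symclpE simp: sigma_step_iff)
    then show ?case using step.IH by (metis rtranclp.rtrancl_into_rtrancl)
  qed simp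
  from this[of "snd P" "snd Q" "fst P"] a show "path_equiv A s t \<sigma> P Q"
    unfolding leq_def by (metis prod.collapse)
qed

definition lstar :: "'a list \<Rightarrow> 'a list \<Rightarrow> bool" where
  "lstar xs ys \<longleftrightarrow> (\<exists>p q x y. x \<in> A \<and> y \<in> A \<and> x \<noteq> y \<and> s x = s y \<and>
        xs = p @ [x, st x y] @ q \<and> ys = p @ [y, st y x] @ q)"

lemma star_step_iff: "star_step A s t \<sigma> P Q \<longleftrightarrow> fst P = fst Q \<and> lstar (snd P) (snd Q)"
  unfolding star_step_def lstar_def by blast

lemma lstar_leq: "lstar xs ys \<Longrightarrow> leq xs ys"
  unfolding lstar_def
proof (elim exE conjE)
  fix p q x y assume a: "x \<in> A" "y \<in> A" "x \<noteq> y" "s x = s y" "xs = p @ [x, st x y] @ q"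
    "ys = p @ [y, st y x] @ q"
  have "leq (x # st x y # q) (y # st y x # q)" using swap[OF a(1,2) a(4)[symmetric]] .
  then have "leq (p @ (x # st x y # q)) (p @ (y # st y x # q))" by (rule leq_app_left)
  then show "leq xs ys" using a by simp
qed

lemma lstar_pow_leq: "(lstar ^^ n) xs ys \<Longrightarrow> leq xs ys"
proof (induction n arbitrary: ys)
  case 0 then show ?case by simp
next
  case (Suc n)
  then obtain zs where "(lstar ^^ n) xs zs" "lstar zs ys" by (auto elim: relpowp_Suc_E)
  then show ?case using Suc.IH lstar_leq leq_trans by blast
qed

lemma lstar_Cons: "lstar xs ys \<Longrightarrow> lstar (a # xs) (a # ys)"
  unfolding lstar_def by (metis append_Cons)

lemma lstar_pow_Cons: "(lstar ^^ n) xs ys \<Longrightarrow> (lstar ^^ n) (a # xs) (a # ys)"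
proof (induction n arbitrary: ys)
  case 0 then show ?case by simp
next
  case (Suc n)
  then obtain zs where "(lstar ^^ n) xs zs" "lstar zs ys" by (auto elim: relpowp_Suc_E)
  then show ?case using Suc.IH lstar_Cons relpowp_Suc_I by metis
qed

lemma G:
  assumes "ch (x # u)" "leq (x # u) (a # w)"
  shows "\<exists>w' k. (lstar ^^ k) (x # u) (a # w') \<and> k \<le> length u"
  using assms
proof (induction "length u" arbitrary: x u a w rule: less_induct)
  case less
  show ?case
  proof (cases "x = a")
    case True
    then show ?thesis by (intro exI[of _ u] exI[of _ 0]) simp
  next
    case False
    obtain w0 where w0: "leq u (st x a # w0)" using Kdiff[OF less.prems False] by blast
    then obtain y u' where u: "u = y # u'" using leq_length[OF w0] by (cases u) auto
    have chu: "ch (y # u')" using less.prems(1) u by (simp add: ch_Cons)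
    have xA: "x \<in> A" using less.prems(1) by (simp add: ch_Cons)
    have sa: "s a = s x" using leq_hd[OF less.prems(2,1)] .
    have aA: "a \<in> A" using leq_ch[OF less.prems(2,1)] by (simp add: ch_Cons)
    obtain w'' k' where k': "(lstar ^^ k') (y # u') (st x a # w'')" "k' \<le> length u'"
      using less.hyps[of u' y "st x a" w0] u chu w0 by auto
    have "(lstar ^^ k') (x # y # u') (x # st x a # w'')" using lstar_pow_Cons[OF k'(1)] .
    moreover have "lstar (x # st x a # w'') (a # st a x # w'')"
      unfolding lstar_def
      by (rule exI[of _ "[]"], rule exI[of _ w''], rule exI[of _ x], rule exI[of _ a])
         (use xA aA False sa in auto)
    ultimately have "(lstar ^^ Suc k') (x # u) (a # st a x # w'')" using u relpowp_Suc_I by metis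
    then show ?thesis using k'(2) u by (intro exI[of _ "st a x # w''"] exI[of _ "Suc k'"]) simp
  qed
qed

lemma T:
  assumes "ch u" "leq u v"
  shows "\<exists>k. (lstar ^^ k) u v \<and> k \<le> (length u)\<^sup>2"
  using assms
proof (induction "length u" arbitrary: u v rule: less_induct)
  case less
  show ?case
  proof (cases u)
    case Nil
    then have "v = []" using leq_length[OF less.prems(2)] by simp
    then show ?thesis using Nil by (intro exI[of _ 0]) simp
  next
    case (Cons x u')
    then obtain a v' where v: "v = a # v'" using leq_length[OF less.prems(2)] by (cases v) auto
    obtain w' k1 where k1: "(lstar ^^ k1) (x # u') (a # w')" "k1 \<le> length u'"
      using G[of x u' a v'] less.prems Cons v by blast
    have l1: "leq (x # u') (a # w')" using lstar_pow_leq[OF k1(1)] .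
    have l2: "leq (a # w') (a # v')" using leq_trans[OF leq_sym[OF l1]] less.prems(2) Cons v by simp
    have ch2: "ch (a # w')" using leq_ch[OF l1] less.prems(1) Cons by simp
    have l3: "leq w' v'" using cancel1[OF ch2 l2] .
    have ch3: "ch w'" using ch2 by (simp add: ch_Cons)
    have len: "length w' = length u'" using leq_length[OF l1] by simp
    obtain k2 where k2: "(lstar ^^ k2) w' v'" "k2 \<le> (length w')\<^sup>2"
      using less.hyps[of w' v'] len Cons ch3 l3 by auto
    have "(lstar ^^ (k1 + k2)) u v" using relpowp_trans[OF k1(1) lstar_pow_Cons[OF k2(1)]] Cons v by simp
    moreover have "k1 + k2 \<le> (length u)\<^sup>2"
    proof -
      have "k1 + k2 \<le> length u' + (length u')\<^sup>2" using k1(2) k2(2) len by simp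
      also have "\<dots> \<le> (Suc (length u'))\<^sup>2" by (simp add: power2_eq_square)
      finally show ?thesis using Cons by simp
    qed
    ultimately show ?thesis by blast
  qed
qed

lemma lstar_pow_path: "(lstar ^^ k) xs ys \<Longrightarrow> (star_step A s t \<sigma> ^^ k) (v, xs) (v, ys)"
proof (induction k arbitrary: ys)
  case 0 then show ?case by simp
next
  case (Suc k)
  then obtain zs where "(lstar ^^ k) xs zs" "lstar zs ys" by (auto elim: relpowp_Suc_E)
  then show ?case using Suc.IH star_step_iff relpowp_Suc_I
    by (metis fst_conv snd_conv)
qed

lemma star_path_equiv: "(star_step A s t \<sigma>)\<^sup>*\<^sup>* P Q \<Longrightarrow> path_equiv A s t \<sigma> P Q"
proof (induction rule: rtranclp_induct)
  case base
  then show ?case by (simp add: path_equiv_iff)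
next
  case (step y z)
  then show ?case using star_step_iff path_equiv_iff lstar_leq leq_trans by metis
qed

lemma part2:
  assumes "valid_path L A s t P" "valid_path L A s t Q"
  shows "path_equiv A s t \<sigma> P Q \<longleftrightarrow> (star_step A s t \<sigma>)\<^sup>*\<^sup>* P Q"
proof
  assume e: "path_equiv A s t \<sigma> P Q"
  obtain v xs where P: "P = (v, xs)" by (cases P)
  obtain w ys where Q: "Q = (w, ys)" by (cases Q)
  have "v = w" "leq xs ys" using e P Q path_equiv_iff by auto
  moreover have "ch xs" using assms(1) P valid_path_iff vch_def by auto
  ultimately obtain k where "(lstar ^^ k) xs ys" using T by blast
  then have "(star_step A s t \<sigma> ^^ k) P Q" using lstar_pow_path P Q \<open>v = w\<close> by simp
  then show "(star_step A s t \<sigma>)\<^sup>*\<^sup>* P Q" by (rule relpowp_imp_rtranclp)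
next
  assume "(star_step A s t \<sigma>)\<^sup>*\<^sup>* P Q"
  then show "path_equiv A s t \<sigma> P Q" by (rule star_path_equiv)
qed

lemma part3_aux:
  assumes a: "valid_path L A s t P" "valid_path L A s t Q" "path_equiv A s t \<sigma> P Q"
  shows "\<exists>n. (star_step A s t \<sigma> ^^ n) P Q \<and>
               real n \<le> 1 * (real (length (snd P) + length (snd Q)))\<^sup>2"
proof -
  obtain v xs where P: "P = (v, xs)" by (cases P)
  obtain w ys where Q: "Q = (w, ys)" by (cases Q)
  have "v = w" "leq xs ys" using a(3) P Q path_equiv_iff by auto
  moreover have "ch xs" using a(1) P valid_path_iff vch_def by auto
  ultimately obtain k where k: "(lstar ^^ k) xs ys" "k \<le> (length xs)\<^sup>2" using T by blast
  then have 1: "(star_step A s t \<sigma> ^^ k) P Q" using lstar_pow_path P Q \<open>v = w\<close> by simp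
  have "k \<le> (length xs + length ys)\<^sup>2"
    using k(2) power_mono[of "length xs" "length xs + length ys" 2] by linarith
  then have "real k \<le> 1 * (real (length (snd P) + length (snd Q)))\<^sup>2"
    using P Q by (metis mult_1 of_nat_le_iff of_nat_power snd_conv)
  with 1 show ?thesis by blast
qed

lemma part3:
  "\<exists>K::real. \<forall>P Q. valid_path L A s t P \<longrightarrow> valid_path L A s t Q \<longrightarrow>
          path_equiv A s t \<sigma> P Q \<longrightarrow>
          (\<exists>n. (star_step A s t \<sigma> ^^ n) P Q \<and>
               real n \<le> K * (real (length (snd P) + length (snd Q)))\<^sup>2)"
  using part3_aux by blast

end

context YBM
begin

abbreviation C where "C \<equiv> structure_cat L A s t \<sigma>"

definition cls :: "'v \<Rightarrow> 'a list \<Rightarrow> ('v \<times> 'a list) set" where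
  "cls v xs = path_class A s t \<sigma> (v, xs)"

lemma cls_mem: "P \<in> cls v xs \<longleftrightarrow> fst P = v \<and> leq xs (snd P)"
  unfolding cls_def path_class_def path_equiv_iff by auto

lemma cls_eq: "cls v xs = cls w ys \<longleftrightarrow> v = w \<and> leq xs ys"
proof
  assume e: "cls v xs = cls w ys"
  have "(v, xs) \<in> cls v xs" by (simp add: cls_mem)
  then have "(v, xs) \<in> cls w ys" using e by simp
  then show "v = w \<and> leq xs ys" by (simp add: cls_mem leq_sym)
next
  assume h: "v = w \<and> leq xs ys"
  have "leq xs z \<longleftrightarrow> leq ys z" for z
  proof
    assume "leq xs z" then show "leq ys z" by (rule leq_trans[OF leq_sym[OF conjunct2[OF h]]])
  next
    assume "leq ys z" then show "leq xs z" by (rule leq_trans[OF conjunct2[OF h]])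
  qed
  then show "cls v xs = cls w ys" unfolding set_eq_iff cls_mem using h by simp
qed

lemma some_cls: "fst (SOME P. P \<in> cls v xs) = v \<and> leq xs (snd (SOME P. P \<in> cls v xs))"
proof -
  have "(v, xs) \<in> cls v xs" by (simp add: cls_mem)
  then have "(SOME P. P \<in> cls v xs) \<in> cls v xs" by (rule someI)
  then show ?thesis by (simp add: cls_mem)
qed

lemma csrc_cls[simp]: "csrc C (cls v xs) = v"
  unfolding structure_cat_def using some_cls by simp

lemma ctgt_cls[simp]: "ctgt C (cls v xs) = ptgt v xs"
proof -
  have "ctgt C (cls v xs) = path_tgt t (SOME P. P \<in> cls v xs)"
    unfolding structure_cat_def by simp
  also have "\<dots> = ptgt (fst (SOME P. P \<in> cls v xs)) (snd (SOME P. P \<in> cls v xs))"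
    using path_tgt_eq by (metis prod.collapse)
  also have "\<dots> = ptgt v xs" using some_cls leq_ptgt by metis
  finally show ?thesis .
qed

lemma cmul_cls[simp]: "cmul C (cls v xs) (cls w ys) = cls v (xs @ ys)"
proof -
  have "cmul C (cls v xs) (cls w ys) =
     path_class A s t \<sigma> (fst (SOME P. P \<in> cls v xs), snd (SOME P. P \<in> cls v xs) @ snd (SOME Q. Q \<in> cls w ys))"
    unfolding structure_cat_def by simp
  also have "\<dots> = cls v (snd (SOME P. P \<in> cls v xs) @ snd (SOME Q. Q \<in> cls w ys))"
    using some_cls unfolding cls_def by metis
  also have "\<dots> = cls v (xs @ ys)"
    unfolding cls_eq using some_cls leq_app leq_sym by metis
  finally show ?thesis .
qed

lemma cid_cls: "cid C v = cls v []"
  unfolding structure_cat_def cls_def by simp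

lemma cobj_C[simp]: "cobj C = L"
  unfolding structure_cat_def by simp

lemma jmap_cls: "jmap A s t \<sigma> x = cls (s x) [x]"
  unfolding jmap_def cls_def by simp

lemma cmor_iff: "c \<in> cmor C \<longleftrightarrow> (\<exists>v xs. c = cls v xs \<and> v \<in> L \<and> vch v xs)"
  unfolding structure_cat_def cls_def using valid_path_iff by auto

lemma cls_cmor: "cls v xs \<in> cmor C \<longleftrightarrow> v \<in> L \<and> vch v xs"
  unfolding cmor_iff cls_eq by (metis leq_vch leq_refl)

lemma cmorE:
  assumes "c \<in> cmor C"
  obtains v xs where "c = cls v xs" "v \<in> L" "vch v xs"
  using assms cmor_iff by blast

definition clen :: "('v \<times> 'a list) set \<Rightarrow> nat" where
  "clen c = length (snd (SOME P. P \<in> c))"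

lemma clen_cls[simp]: "clen (cls v xs) = length xs"
  unfolding clen_def using some_cls leq_length by metis

lemma composable_cls: "composable C (cls v xs) (cls w ys) \<longleftrightarrow> ptgt v xs = w"
  unfolding composable_def by simp

lemma ldiv_cls:
  assumes "v \<in> L"
  shows "left_divides C (cls v xs) m \<longleftrightarrow> (\<exists>zs. vch v (xs @ zs) \<and> m = cls v (xs @ zs))"
proof
  assume "left_divides C (cls v xs) m"
  then obtain z where z: "cls v xs \<in> cmor C" "z \<in> cmor C" "composable C (cls v xs) z"
    "m = cmul C (cls v xs) z" unfolding left_divides_def by blast
  obtain w zs where zz: "z = cls w zs" "w \<in> L" "vch w zs" using z(2) by (rule cmorE)
  have "vch v xs" using z(1) cls_cmor by blast
  moreover have "ptgt v xs = w" using z(3) zz composable_cls by simp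
  ultimately have "vch v (xs @ zs)" using zz vch_append by simp
  then show "\<exists>zs. vch v (xs @ zs) \<and> m = cls v (xs @ zs)" using z(4) zz by auto
next
  assume "\<exists>zs. vch v (xs @ zs) \<and> m = cls v (xs @ zs)"
  then obtain zs where zs: "vch v (xs @ zs)" "m = cls v (xs @ zs)" by blast
  have 1: "cls v xs \<in> cmor C" using zs(1) assms cls_cmor vch_append by blast
  have 2: "cls (ptgt v xs) zs \<in> cmor C" using zs(1) assms cls_cmor vch_append ptgt_L by blast
  have 3: "m \<in> cmor C" using zs assms cls_cmor by blast
  show "left_divides C (cls v xs) m" unfolding left_divides_def
    using 1 2 3 zs(2) composable_cls by fastforce
qed

lemma ldiv_antisym:
  assumes "left_divides C a b" "left_divides C b a"
  shows "a = b"
proof -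
  have "a \<in> cmor C" using assms unfolding left_divides_def by blast
  then obtain v xs where a: "a = cls v xs" "v \<in> L" "vch v xs" by (rule cmorE)
  obtain zs where b: "b = cls v (xs @ zs)" using assms(1) ldiv_cls a by blast
  obtain zs' where "a = cls v (xs @ zs @ zs')" using assms(2) ldiv_cls a b by fastforce
  then have "length xs = length (xs @ zs @ zs')" using a cls_eq leq_length by metis
  then have "zs = []" by simp
  then show ?thesis using a b by simp
qed

lemma left_canc: "left_cancellative C"
  unfolding left_cancellative_def
proof (intro ballI impI)
  fix x y z assume m: "x \<in> cmor C" "y \<in> cmor C" "z \<in> cmor C"
    and c: "composable C x y \<and> composable C x z \<and> cmul C x y = cmul C x z"
  obtain v xs where x: "x = cls v xs" "v \<in> L" "vch v xs" using m(1) by (rule cmorE)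
  obtain w ys where y: "y = cls w ys" "w \<in> L" "vch w ys" using m(2) by (rule cmorE)
  obtain w' zs where z: "z = cls w' zs" "w' \<in> L" "vch w' zs" using m(3) by (rule cmorE)
  have w: "w = ptgt v xs" "w' = ptgt v xs" using c x y z composable_cls by auto
  have "leq (xs @ ys) (xs @ zs)" using c x y z cls_eq by simp
  moreover have "ch (xs @ ys)" using x y w vch_append vch_def by metis
  ultimately have "leq ys zs" by (rule cancel[rotated])
  then show "y = z" using y z w cls_eq by simp
qed

lemma invertible_id:
  assumes "invertible C x"
  shows "is_identity C x"
proof -
  obtain y where y: "x \<in> cmor C" "y \<in> cmor C" "cmul C x y = cid C (csrc C x)"
    using assms unfolding invertible_def by blast
  obtain v xs where x: "x = cls v xs" "v \<in> L" "vch v xs" using y(1) by (rule cmorE)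
  obtain w ys where yy: "y = cls w ys" using y(2) by (rule cmorE)
  have "leq (xs @ ys) []" using y(3) x yy cid_cls cls_eq by simp
  then have "xs = []" using leq_length by fastforce
  then show ?thesis unfolding is_identity_def using x cid_cls by auto
qed

lemma invertible_iff: "invertible C x \<longleftrightarrow> x \<in> cmor C \<and> clen x = 0"
proof
  assume a: "invertible C x"
  then have "x \<in> cmor C" unfolding invertible_def by blast
  moreover obtain v where "v \<in> L" "x = cid C v" using invertible_id[OF a] unfolding is_identity_def by auto
  ultimately show "x \<in> cmor C \<and> clen x = 0" using cid_cls by simp
next
  assume a: "x \<in> cmor C \<and> clen x = 0"
  then obtain v xs where x: "x = cls v xs" "v \<in> L" "vch v xs" by (meson cmorE)
  then have "xs = []" using a by simp
  then show "invertible C x" unfolding invertible_def composable_def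
    using a x cid_cls by (intro conjI bexI[of _ x]) simp_all
qed

definition WL :: "'a list \<Rightarrow> 'a list \<Rightarrow> 'a list \<Rightarrow> 'a list \<Rightarrow> bool" where
  "WL f g a b \<longleftrightarrow> leq (f @ a) (g @ b) \<and>
     (\<forall>p q. ch (f @ p) \<and> leq (f @ p) (g @ q) \<longrightarrow> (\<exists>r. leq p (a @ r) \<and> leq q (b @ r)))"

lemma WL_atoms:
  assumes "x \<in> A" "y \<in> A" "s y = s x" "x \<noteq> y"
  shows "WL [x] [y] [st x y] [st y x]"
  unfolding WL_def
proof (intro conjI allI impI)
  show "leq ([x] @ [st x y]) ([y] @ [st y x])" using swap[OF assms(1-3), of "[]"] by simp
next
  fix p q assume "ch ([x] @ p) \<and> leq ([x] @ p) ([y] @ q)"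
  then obtain w where "leq p (st x y # w)" "leq q (st y x # w)" using Kdiff assms(4) by fastforce
  then show "\<exists>r. leq p ([st x y] @ r) \<and> leq q ([st y x] @ r)" by auto
qed

lemma L1:
  assumes "ch (x # p)" "leq (x # p) (g @ q)"
  shows "\<exists>a b. WL [x] g a b"
  using assms
proof (induction g arbitrary: x p q)
  case Nil
  have "WL [x] [] [] [x]" unfolding WL_def
  proof (intro conjI allI impI)
    fix p q assume "ch ([x] @ p) \<and> leq ([x] @ p) ([] @ q)"
    then have "leq q ([x] @ p)" using leq_sym by simp
    then show "\<exists>r. leq p ([] @ r) \<and> leq q ([x] @ r)" by (intro exI[of _ p]) simp
  qed simp
  then show ?case by blast
next
  case (Cons y g')
  show ?case
  proof (cases "x = y")
    case True
    have "WL [x] (x # g') g' []" unfolding WL_def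
    proof (intro conjI allI impI)
      fix p' q' assume "ch ([x] @ p') \<and> leq ([x] @ p') ((x # g') @ q')"
      then have "leq p' (g' @ q')" using cancel1[of x p' "g' @ q'"] by simp
      then show "\<exists>r. leq p' (g' @ r) \<and> leq q' ([] @ r)" by auto
    qed simp
    then show ?thesis using True by blast
  next
    case False
    have l: "leq (x # p) (y # (g' @ q))" using Cons.prems by simp
    have xA: "x \<in> A" using Cons.prems(1) by (simp add: ch_Cons)
    have chy: "ch (y # (g' @ q))" using leq_ch[OF l Cons.prems(1)] .
    have yA: "y \<in> A" and sy: "s y = s x" using chy leq_hd[OF l Cons.prems(1)] by (auto simp: ch_Cons)
    obtain w where w: "leq p (st x y # w)" "leq (g' @ q) (st y x # w)"
      using Kdiff[OF Cons.prems(1) l False] by blast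
    have chg: "ch (g' @ q)" using chy by (simp add: ch_Cons)
    have chw: "ch (st y x # w)" using leq_ch[OF w(2) chg] .
    obtain a' b' where ab: "WL [st y x] g' a' b'"
      using Cons.IH[OF chw leq_sym[OF w(2)]] by blast
    have "WL [x] (y # g') (st x y # a') b'" unfolding WL_def
    proof (intro conjI allI impI)
      have "leq (x # st x y # a') (y # st y x # a')" using swap[OF xA yA sy] .
      also have "leq (y # st y x # a') (y # (g' @ b'))"
        using ab unfolding WL_def by (simp add: leq_Cons)
      finally show "leq ([x] @ st x y # a') ((y # g') @ b')" by simp
    next
      fix p' q' assume a: "ch ([x] @ p') \<and> leq ([x] @ p') ((y # g') @ q')"
      then have a1: "ch (x # p')" "leq (x # p') (y # (g' @ q'))" by simp_all
      obtain w' where w': "leq p' (st x y # w')" "leq (g' @ q') (st y x # w')"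
        using Kdiff[OF a1 False] by blast
      have "ch (g' @ q')" using leq_ch[OF a1(2) a1(1)] by (simp add: ch_Cons)
      then have "ch ([st y x] @ w')" using leq_ch[OF w'(2)] by simp
      moreover have "leq ([st y x] @ w') (g' @ q')" using leq_sym[OF w'(2)] by simp
      ultimately obtain r where r: "leq w' (a' @ r)" "leq q' (b' @ r)"
        using ab unfolding WL_def by blast
      have "leq p' ((st x y # a') @ r)" using leq_trans[OF w'(1) leq_Cons[OF r(1)]] by simp
      then show "\<exists>r. leq p' ((st x y # a') @ r) \<and> leq q' (b' @ r)" using r(2) by blast
    qed
    then show ?thesis by blast
  qed
qed

lemma L2:
  assumes "ch (f @ p)" "leq (f @ p) (g @ q)"
  shows "\<exists>a b. WL f g a b"
  using assms
proof (induction f arbitrary: g p q)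
  case Nil
  have "WL [] g g []" unfolding WL_def by auto
  then show ?case by blast
next
  case (Cons x f')
  have "\<exists>a b. WL [x] g a b"
    using L1[of x "f' @ p" g q] Cons.prems by simp
  then obtain a b where ab: "WL [x] g a b" by blast
  have ch1: "ch (f' @ p)" using Cons.prems(1) by (simp add: ch_Cons)
  obtain r where r: "leq (f' @ p) (a @ r)" "leq q (b @ r)"
    using ab Cons.prems unfolding WL_def by fastforce
  obtain a2 b2 where ab2: "WL f' a a2 b2" using Cons.IH[OF ch1 r(1)] by blast
  have "WL (x # f') g a2 (b @ b2)" unfolding WL_def
  proof (intro conjI allI impI)
    have "leq (x # (f' @ a2)) (x # (a @ b2))" using ab2 unfolding WL_def by (simp add: leq_Cons)
    also have "leq (x # (a @ b2)) ((g @ b) @ b2)"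
      using leq_app_right[of "[x] @ a" "g @ b" b2] ab unfolding WL_def by simp
    finally show "leq ((x # f') @ a2) (g @ b @ b2)" by simp
  next
    fix p' q' assume a: "ch ((x # f') @ p') \<and> leq ((x # f') @ p') (g @ q')"
    then obtain r1 where r1: "leq (f' @ p') (a @ r1)" "leq q' (b @ r1)"
      using ab unfolding WL_def by fastforce
    have "ch (f' @ p')" using a by (simp add: ch_Cons)
    then obtain r2 where r2: "leq p' (a2 @ r2)" "leq r1 (b2 @ r2)"
      using ab2 r1(1) unfolding WL_def by blast
    have "leq q' (b @ b2 @ r2)" using leq_trans[OF r1(2) leq_app_left[OF r2(2), of b]] by simp
    then show "\<exists>r. leq p' (a2 @ r) \<and> leq q' ((b @ b2) @ r)" using r2(1) by auto
  qed
  then show ?case by blast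
qed

lemma lcm_cat:
  assumes v: "v \<in> L" and ch: "vch v (f @ a)" and wl: "WL f g a b"
  shows "is_right_lcm C (cls v f) (cls v g) (cls v (f @ a))"
  unfolding is_right_lcm_def common_right_multiple_def
proof (intro conjI allI impI)
  have e: "cls v (f @ a) = cls v (g @ b)" using wl unfolding WL_def cls_eq by simp
  have chg: "vch v (g @ b)" using ch wl leq_vch unfolding WL_def by blast
  show "left_divides C (cls v f) (cls v (f @ a))" using ldiv_cls[OF v] ch by blast
  show "left_divides C (cls v g) (cls v (f @ a))" using ldiv_cls[OF v] chg e by blast
next
  fix w assume a: "left_divides C (cls v f) w \<and> left_divides C (cls v g) w"
  obtain zs where zs: "vch v (f @ zs)" "w = cls v (f @ zs)" using a ldiv_cls[OF v] by blast
  obtain zs2 where zs2: "w = cls v (g @ zs2)" using a ldiv_cls[OF v] by blast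
  have "cls v (f @ zs) = cls v (g @ zs2)" using zs zs2 by simp
  then have "leq (f @ zs) (g @ zs2)" by (simp add: cls_eq)
  moreover have "ch (f @ zs)" using zs(1) vch_def by blast
  ultimately obtain r where r: "leq zs (a @ r)" using wl unfolding WL_def by blast
  have "leq (f @ zs) ((f @ a) @ r)" using leq_app_left[OF r] by simp
  then have "w = cls v ((f @ a) @ r)" "vch v ((f @ a) @ r)" using zs cls_eq leq_vch by auto
  then show "left_divides C (cls v (f @ a)) w" using ldiv_cls[OF v] by blast
qed

lemma lcm_exists:
  assumes "x \<in> cmor C" "y \<in> cmor C" "common_right_multiple C x y m"
  shows "\<exists>l. is_right_lcm C x y l"
proof -
  obtain v f where x: "x = cls v f" "v \<in> L" "vch v f" using assms(1) by (rule cmorE)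
  obtain v' g where y: "y = cls v' g" "v' \<in> L" "vch v' g" using assms(2) by (rule cmorE)
  obtain p where p: "vch v (f @ p)" "m = cls v (f @ p)"
    using assms(3) ldiv_cls[OF x(2)] x unfolding common_right_multiple_def by blast
  obtain q where q: "m = cls v' (g @ q)"
    using assms(3) ldiv_cls[OF y(2)] y unfolding common_right_multiple_def by blast
  have "cls v (f @ p) = cls v' (g @ q)" using p q by simp
  then have vv: "v' = v" and l: "leq (f @ p) (g @ q)" by (simp_all add: cls_eq)
  have chp: "ch (f @ p)" using p vch_def by blast
  obtain a b where wl: "WL f g a b" using L2[OF chp l] by blast
  obtain r where "leq p (a @ r)" using wl chp l unfolding WL_def by blast
  then have "vch v (f @ a @ r)" using p(1) leq_vch leq_app_left by blast
  then have "vch v (f @ a)" using vch_append by (metis append.assoc)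
  then show ?thesis using lcm_cat[OF x(2) _ wl] x y vv by blast
qed

lemma lcm_unique:
  assumes "is_right_lcm C x y m1" "is_right_lcm C x y m2"
  shows "m1 = m2"
  using assms ldiv_antisym unfolding is_right_lcm_def by blast

lemma ucrl: "unique_conditional_right_lcms C"
  unfolding unique_conditional_right_lcms_def
  using lcm_exists lcm_unique by metis

lemma part_atoms_lcm:
  assumes "x \<in> A" "y \<in> A" "x \<noteq> y" "s x = s y"
  shows "cmul C (jmap A s t \<sigma> x) (jmap A s t \<sigma> (st x y)) = cmul C (jmap A s t \<sigma> y) (jmap A s t \<sigma> (st y x)) \<and>
     is_right_lcm C (jmap A s t \<sigma> x) (jmap A s t \<sigma> y) (cmul C (jmap A s t \<sigma> x) (jmap A s t \<sigma> (st x y)))"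
proof -
  have e: "cmul C (jmap A s t \<sigma> x) (jmap A s t \<sigma> (st x y)) = cls (s x) [x, st x y]"
    by (simp add: jmap_cls)
  have e2: "cmul C (jmap A s t \<sigma> y) (jmap A s t \<sigma> (st y x)) = cls (s x) [y, st y x]"
    using assms by (simp add: jmap_cls)
  have l: "leq [x, st x y] [y, st y x]" using swap[OF assms(1,2) assms(4)[symmetric], of "[]"] .
  have S: "st x y \<in> A" "s (st x y) = t x" using st_props[OF assms(1,2) assms(4)[symmetric]] by auto
  have vch: "vch (s x) ([x] @ [st x y])" using S assms by (simp add: vch_Cons)
  have "is_right_lcm C (cls (s x) [x]) (cls (s x) [y]) (cls (s x) ([x] @ [st x y]))"
    using lcm_cat[OF _ vch WL_atoms[OF assms(1,2) assms(4)[symmetric] assms(3)]] qv assms by blast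
  then show ?thesis using e e2 l cls_eq assms by (simp add: jmap_cls)
qed

lemma inj_j: "inj_on (jmap A s t \<sigma>) A"
proof (rule inj_onI)
  fix x y assume "x \<in> A" "y \<in> A" "jmap A s t \<sigma> x = jmap A s t \<sigma> y"
  then have "leq [x] [y]" using cls_eq by (simp add: jmap_cls)
  then show "x = y"
  proof -
    assume l: "leq [x] [y]"
    have nl: "lstep xs ys \<Longrightarrow> 2 \<le> length xs" for xs ys by (auto simp: lstep_def)
    have "(symclp lstep)\<^sup>*\<^sup>* [x] z \<Longrightarrow> z = [x]" for z
    proof (induction rule: rtranclp_induct)
      case (step y z)
      then have "symclp lstep [x] z" by simp
      then show ?case
      proof (cases rule: symclpE)
        case base then show ?thesis using nl by fastforce
      next
        case sym then show ?thesis using nl lstep_length by fastforce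
      qed
    qed simp
    then show ?thesis using l unfolding leq_def by fastforce
  qed
qed

lemma clen_mul:
  assumes "a \<in> cmor C" "b \<in> cmor C"
  shows "clen (cmul C a b) = clen a + clen b"
  using assms by (metis cmorE cmul_cls clen_cls length_append)

lemma noeth: "noetherian C"
  unfolding noetherian_def
proof (rule wfp_if_convertible_to_nat[of _ clen])
  fix x y assume "proper_factor C x y"
  then obtain y' y'' where a: "x \<in> cmor C" "y' \<in> cmor C" "y'' \<in> cmor C"
    "composable C y' x" "composable C x y''" "y = cmul C (cmul C y' x) y''"
    "\<not> invertible C y' \<or> \<not> invertible C y''"
    unfolding proper_factor_def by blast
  have m: "cmul C y' x \<in> cmor C"
  proof -
    obtain v xs where 1: "y' = cls v xs" "v \<in> L" "vch v xs" using a(2) by (rule cmorE)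
    obtain w ys where 2: "x = cls w ys" "w \<in> L" "vch w ys" using a(1) by (rule cmorE)
    have "ptgt v xs = w" using a(4) 1 2 composable_cls by simp
    then show ?thesis using 1 2 cls_cmor vch_append by simp
  qed
  have "clen y = clen y' + clen x + clen y''" using a(6) clen_mul[OF m a(3)] clen_mul[OF a(2,1)] by simp
  moreover have "clen y' > 0 \<or> clen y'' > 0" using a(7) a(2,3) invertible_iff by auto
  ultimately show "clen x < clen y" by auto
qed

end

context YBM
begin

definition iscls :: "('v \<times> 'a list) set \<Rightarrow> bool" where
  "iscls c \<longleftrightarrow> (\<exists>v xs. c = cls v xs)"

lemma cmor_iscls: "c \<in> cmor C \<Longrightarrow> iscls c"
  unfolding iscls_def by (metis cmorE)

lemma iscls_mul: "iscls (cmul C a b)"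
  unfolding iscls_def structure_cat_def cls_def by auto

lemma iscls_cls[simp]: "iscls (cls v xs)"
  unfolding iscls_def by blast

lemma isclsE:
  assumes "iscls c" obtains v xs where "c = cls v xs"
  using assms unfolding iscls_def by blast

lemma assoc:
  assumes "iscls a" "iscls b" "iscls c"
  shows "cmul C (cmul C a b) c = cmul C a (cmul C b c)"
  using assms by (elim isclsE) simp

lemma csrc_mul:
  assumes "iscls a" "iscls b"
  shows "csrc C (cmul C a b) = csrc C a"
  using assms by (elim isclsE) simp

lemma mul_cmor:
  assumes "a \<in> cmor C" "b \<in> cmor C" "composable C a b"
  shows "cmul C a b \<in> cmor C"
proof -
  obtain v xs where 1: "a = cls v xs" "v \<in> L" "vch v xs" using assms(1) by (rule cmorE)
  obtain w ys where 2: "b = cls w ys" "w \<in> L" "vch w ys" using assms(2) by (rule cmorE)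
  have "ptgt v xs = w" using assms(3) 1 2 composable_cls by simp
  then show ?thesis using 1 2 cls_cmor vch_append by simp
qed

lemma ctgt_mul:
  assumes "a \<in> cmor C" "b \<in> cmor C" "composable C a b"
  shows "ctgt C (cmul C a b) = ctgt C b"
proof -
  obtain v xs where 1: "a = cls v xs" "v \<in> L" "vch v xs" using assms(1) by (rule cmorE)
  obtain w ys where 2: "b = cls w ys" "w \<in> L" "vch w ys" using assms(2) by (rule cmorE)
  have "ptgt v xs = w" using assms(3) 1 2 composable_cls by simp
  then show ?thesis using 1 2 by simp
qed

lemma cid_cmor: "v \<in> L \<Longrightarrow> cid C v \<in> cmor C"
  using cid_cls cls_cmor by simp

lemma csrc_cid[simp]: "csrc C (cid C v) = v" and ctgt_cid[simp]: "ctgt C (cid C v) = v"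
  using cid_cls by simp_all

lemma cid_left: "a \<in> cmor C \<Longrightarrow> cmul C (cid C (csrc C a)) a = a"
  by (metis cmorE cid_cls cmul_cls csrc_cls append_Nil)

lemma cid_right: "a \<in> cmor C \<Longrightarrow> cmul C a (cid C (ctgt C a)) = a"
  by (metis cmorE cid_cls cmul_cls append_Nil2)

lemma src_L: "a \<in> cmor C \<Longrightarrow> csrc C a \<in> L"
  by (metis cmorE csrc_cls)

lemma tgt_L: "a \<in> cmor C \<Longrightarrow> ctgt C a \<in> L"
  by (metis cmorE ctgt_cls ptgt_L)

lemma ldiv_cmor: "left_divides C a b \<Longrightarrow> a \<in> cmor C \<and> b \<in> cmor C"
  unfolding left_divides_def by blast

lemma ldiv_mul: "a \<in> cmor C \<Longrightarrow> b \<in> cmor C \<Longrightarrow> composable C a b \<Longrightarrow> left_divides C a (cmul C a b)"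
  unfolding left_divides_def using mul_cmor by blast

lemma ldiv_refl: "a \<in> cmor C \<Longrightarrow> left_divides C a a"
  using ldiv_mul[of a "cid C (ctgt C a)"] cid_right cid_cmor tgt_L
  unfolding composable_def by simp

lemma ldivE:
  assumes "left_divides C a b"
  obtains v xs zs where "a = cls v xs" "b = cls v (xs @ zs)" "v \<in> L" "vch v (xs @ zs)"
proof -
  obtain v xs where 1: "a = cls v xs" "v \<in> L" "vch v xs" using assms ldiv_cmor by (meson cmorE)
  then obtain zs where "vch v (xs @ zs)" "b = cls v (xs @ zs)" using assms ldiv_cls by blast
  then show ?thesis using that 1 by blast
qed

lemma ldiv_trans: "left_divides C a b \<Longrightarrow> left_divides C b c \<Longrightarrow> left_divides C a c"
proof -
  assume ab: "left_divides C a b" and bc: "left_divides C b c"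
  obtain v xs zs where 1: "a = cls v xs" "b = cls v (xs @ zs)" "v \<in> L" "vch v (xs @ zs)"
    using ab by (rule ldivE)
  obtain zs' where "vch v (xs @ zs @ zs')" "c = cls v (xs @ zs @ zs')"
    using bc 1 ldiv_cls by fastforce
  then show ?thesis using 1 ldiv_cls by (metis append.assoc)
qed

lemma ldiv_src: "left_divides C a b \<Longrightarrow> csrc C a = csrc C b"
  by (metis ldivE csrc_cls)

lemma ldiv_len: "left_divides C a b \<Longrightarrow> clen a \<le> clen b"
  by (metis ldivE clen_cls length_append le_add1)

lemma ldiv_len_eq: "left_divides C a b \<Longrightarrow> clen a = clen b \<Longrightarrow> a = b"
proof -
  assume a: "left_divides C a b" "clen a = clen b"
  obtain v xs zs where 1: "a = cls v xs" "b = cls v (xs @ zs)" using a(1) by (rule ldivE)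
  then have "zs = []" using a(2) by simp
  then show ?thesis using 1 by simp
qed

lemma ldiv_cancel:
  assumes "a \<in> cmor C" "b \<in> cmor C" "c \<in> cmor C" "composable C a b" "composable C a c"
    "left_divides C (cmul C a b) (cmul C a c)"
  shows "left_divides C b c"
proof -
  obtain v xs where 1: "a = cls v xs" "v \<in> L" "vch v xs" using assms(1) by (rule cmorE)
  obtain w ys where 2: "b = cls w ys" "w \<in> L" "vch w ys" using assms(2) by (rule cmorE)
  obtain w' zs where 3: "c = cls w' zs" "w' \<in> L" "vch w' zs" using assms(3) by (rule cmorE)
  have w: "w = ptgt v xs" "w' = ptgt v xs" using assms(4,5) 1 2 3 composable_cls by auto
  obtain rs where rs: "vch v (xs @ ys @ rs)" "cls v (xs @ zs) = cls v (xs @ ys @ rs)"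
    using assms(6) 1 2 3 ldiv_cls by fastforce
  have "leq (xs @ zs) (xs @ (ys @ rs))" using rs(2) cls_eq by simp
  moreover have "ch (xs @ zs)" using 3 w 1 vch_append vch_def by metis
  ultimately have "leq zs (ys @ rs)" by (rule cancel[rotated])
  moreover have "vch w (ys @ rs)" using rs(1) w vch_append by simp
  ultimately show ?thesis using 2 3 w ldiv_cls cls_eq by metis
qed

lemma ldiv_mono:
  assumes "a \<in> cmor C" "composable C a b" "left_divides C b c"
  shows "left_divides C (cmul C a b) (cmul C a c)"
proof -
  obtain v xs where 1: "a = cls v xs" "v \<in> L" "vch v xs" using assms(1) by (rule cmorE)
  obtain w ys zs where 2: "b = cls w ys" "c = cls w (ys @ zs)" "w \<in> L" "vch w (ys @ zs)"
    using assms(3) by (rule ldivE)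
  have w: "w = ptgt v xs" using assms(2) 1 2 composable_cls by auto
  have "vch v (xs @ ys @ zs)" using 1 2 w vch_append by simp
  then show ?thesis using 1 2 ldiv_cls by (metis append.assoc cmul_cls)
qed

lemma lcm_sym: "is_right_lcm C a b m \<longleftrightarrow> is_right_lcm C b a m"
  unfolding is_right_lcm_def common_right_multiple_def by blast

lemma lcm_ldiv: "left_divides C a b \<Longrightarrow> is_right_lcm C a b b"
  unfolding is_right_lcm_def common_right_multiple_def using ldiv_refl ldiv_cmor by blast

lemma crm_src: "common_right_multiple C a b m \<Longrightarrow> csrc C a = csrc C b"
  unfolding common_right_multiple_def using ldiv_src by metis

lemma lcm_cmor: "is_right_lcm C a b m \<Longrightarrow> m \<in> cmor C"
  unfolding is_right_lcm_def common_right_multiple_def using ldiv_cmor by blast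

lemma cid_ldiv: "a \<in> cmor C \<Longrightarrow> left_divides C (cid C (csrc C a)) a"
  using ldiv_mul[of "cid C (csrc C a)" a] cid_left cid_cmor src_L unfolding composable_def by simp

lemma is_chain_Cons: "is_chain C (x # xs) \<longleftrightarrow> x \<in> cmor C \<and> is_chain C xs \<and> (xs \<noteq> [] \<longrightarrow> composable C x (hd xs))"
proof -
  have "(\<forall>i. Suc i < length (x # xs) \<longrightarrow> composable C ((x # xs) ! i) ((x # xs) ! Suc i))
    \<longleftrightarrow> (xs \<noteq> [] \<longrightarrow> composable C x (hd xs)) \<and> (\<forall>i. Suc i < length xs \<longrightarrow> composable C (xs ! i) (xs ! Suc i))"
    (is "?l \<longleftrightarrow> ?r")
  proof
    assume l: ?l
    show ?r
    proof (intro conjI impI allI)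
      assume "xs \<noteq> []" then show "composable C x (hd xs)" using l[rule_format, of 0] by (cases xs) auto
    next
      fix i assume "Suc i < length xs" then show "composable C (xs ! i) (xs ! Suc i)"
        using l[rule_format, of "Suc i"] by simp
    qed
  next
    assume r: ?r
    show ?l
    proof (intro allI impI)
      fix i assume i: "Suc i < length (x # xs)"
      show "composable C ((x # xs) ! i) ((x # xs) ! Suc i)"
      proof (cases i)
        case 0 then show ?thesis using r i by (cases xs) auto
      next
        case (Suc j) then show ?thesis using r i by simp
      qed
    qed
  qed
  then show ?thesis unfolding is_chain_def by auto
qed

lemma list_prod_single[simp]: "list_prod C [x] = x"
  unfolding list_prod_def by simp

lemma foldl_assoc:
  assumes "iscls x" "iscls y0" "\<forall>z\<in>set ys. iscls z"
  shows "foldl (cmul C) (cmul C x y0) ys = cmul C x (foldl (cmul C) y0 ys)"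
  using assms(2,3)
proof (induction ys arbitrary: y0)
  case (Cons z zs)
  have "foldl (cmul C) (cmul C x y0) (z # zs) = foldl (cmul C) (cmul C x (cmul C y0 z)) zs"
    using assoc[OF assms(1) Cons.prems(1)] Cons.prems(2) by simp
  also have "\<dots> = cmul C x (foldl (cmul C) (cmul C y0 z) zs)"
    using Cons.IH[of "cmul C y0 z"] iscls_mul Cons.prems(2) by simp
  finally show ?case by simp
qed simp

lemma list_prod_Cons:
  assumes "xs \<noteq> []" "iscls x" "\<forall>z\<in>set xs. iscls z"
  shows "list_prod C (x # xs) = cmul C x (list_prod C xs)"
proof -
  obtain y ys where xs: "xs = y # ys" using assms(1) by (cases xs) auto
  show ?thesis unfolding list_prod_def using xs foldl_assoc[OF assms(2), of y ys] assms(3) by simp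
qed

lemma chain_prod:
  assumes "is_chain C xs" "xs \<noteq> []"
  shows "list_prod C xs \<in> cmor C \<and> csrc C (list_prod C xs) = csrc C (hd xs) \<and>
    clen (list_prod C xs) = sum_list (map clen xs) \<and> left_divides C (hd xs) (list_prod C xs)"
  using assms
proof (induction xs)
  case (Cons x xs)
  show ?case
  proof (cases "xs = []")
    case True
    then show ?thesis using Cons.prems ldiv_refl by (simp add: is_chain_Cons)
  next
    case False
    have ch: "x \<in> cmor C" "is_chain C xs" "composable C x (hd xs)"
      using Cons.prems False by (auto simp: is_chain_Cons)
    note IH = Cons.IH[OF ch(2) False]
    have cl: "\<forall>z\<in>set xs. iscls z" using ch(2) cmor_iscls unfolding is_chain_def by blast
    have e: "list_prod C (x # xs) = cmul C x (list_prod C xs)"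
      using list_prod_Cons[OF False cmor_iscls[OF ch(1)] cl] .
    have comp: "composable C x (list_prod C xs)" using ch(3) IH unfolding composable_def by simp
    show ?thesis using e mul_cmor[OF ch(1) _ comp] IH csrc_mul[OF cmor_iscls[OF ch(1)] cmor_iscls]
        clen_mul[OF ch(1)] ldiv_mul[OF ch(1) _ comp] by simp
  qed
qed simp

lemma sum1_filter:
  fixes f :: "'b \<Rightarrow> nat"
  shows "sum_list (map f xs) = 1 \<Longrightarrow> length (filter (\<lambda>y. f y \<noteq> 0) xs) = 1"
proof (induction xs)
  case (Cons x xs)
  show ?case
  proof (cases "f x = 0")
    case True then show ?thesis using Cons by simp
  next
    case False
    have "f x + sum_list (map f xs) = 1" using Cons.prems by simp
    then have "sum_list (map f xs) = 0" using False by linarith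
    then have "filter (\<lambda>y. f y \<noteq> 0) xs = []" by (induction xs) auto
    then show ?thesis using False by simp
  qed
qed simp

lemma atoms: "{x. atom C x} = jmap A s t \<sigma> ` A"
proof (intro set_eqI iffI)
  fix x assume "x \<in> {x. atom C x}"
  then have at: "atom C x" by simp
  then have xm: "x \<in> cmor C" unfolding atom_def by blast
  obtain v xs where x: "x = cls v xs" "v \<in> L" "vch v xs" using xm by (rule cmorE)
  have one: "\<And>ys. ys \<noteq> [] \<Longrightarrow> is_chain C ys \<Longrightarrow> list_prod C ys = x \<Longrightarrow>
     length (filter (\<lambda>y. \<not> invertible C y) ys) = 1" using at unfolding atom_def by blast
  show "x \<in> jmap A s t \<sigma> ` A"
  proof (cases xs)
    case Nil
    have "length (filter (\<lambda>y. \<not> invertible C y) [x]) = 1"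
      using one[of "[x]"] xm by (simp add: is_chain_Cons is_chain_def)
    moreover have "invertible C x" using invertible_iff xm x Nil by simp
    ultimately show ?thesis by simp
  next
    case (Cons a rest)
    show ?thesis
    proof (cases rest)
      case Nil
      then have "x = jmap A s t \<sigma> a" "a \<in> A" using x Cons by (auto simp: jmap_cls vch_Cons)
      then show ?thesis by blast
    next
      case (Cons b rest')
      define c1 where "c1 = cls v [a]"
      define c2 where "c2 = cls (t a) rest"
      have va: "a \<in> A" "s a = v" "vch (t a) rest" using x \<open>xs = a # rest\<close> by (auto simp: vch_Cons)
      have m: "c1 \<in> cmor C" "c2 \<in> cmor C" unfolding c1_def c2_def
        using va x(2) qv by (auto simp: cls_cmor vch_Cons)
      have comp: "composable C c1 c2" unfolding c1_def c2_def composable_cls by simp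
      have ch: "is_chain C [c1, c2]" using m comp by (simp add: is_chain_Cons is_chain_def)
      have pr: "list_prod C [c1, c2] = x" unfolding list_prod_def c1_def c2_def using x \<open>xs = a # rest\<close> by simp
      have ni: "\<not> invertible C c1" "\<not> invertible C c2" unfolding invertible_iff c1_def c2_def
        using Cons by auto
      show ?thesis using one[OF _ ch pr] ni by simp
    qed
  qed
next
  fix x assume "x \<in> jmap A s t \<sigma> ` A"
  then obtain a where a: "a \<in> A" "x = cls (s a) [a]" by (auto simp: jmap_cls)
  have xm: "x \<in> cmor C" using a qv by (simp add: cls_cmor vch_Cons)
  show "x \<in> {x. atom C x}" unfolding atom_def
  proof (intro CollectI conjI xm allI impI)
    fix ys assume ys: "ys \<noteq> [] \<and> is_chain C ys \<and> list_prod C ys = x"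
    have "sum_list (map clen ys) = 1" using chain_prod[of ys] ys a by simp
    then have "length (filter (\<lambda>y. clen y \<noteq> 0) ys) = 1" by (rule sum1_filter)
    moreover have "filter (\<lambda>y. \<not> invertible C y) ys = filter (\<lambda>y. clen y \<noteq> 0) ys"
      using ys invertible_iff unfolding is_chain_def by (intro filter_cong) auto
    ultimately show "length (filter (\<lambda>y. \<not> invertible C y) ys) = 1" by simp
  qed
qed

end

context YBM
begin

abbreviation J where "J \<equiv> jmap A s t \<sigma>"
abbreviation E where "E \<equiv> rlcm_closure C (J ` A \<union> cid C ` L)"

lemma J_cmor: "a \<in> A \<Longrightarrow> J a \<in> cmor C"
  using qv by (simp add: jmap_cls cls_cmor vch_Cons)

lemma J_simps: "csrc C (J a) = s a" "ctgt C (J a) = t a" "clen (J a) = 1"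
  by (simp_all add: jmap_cls)

lemma E_cmor: "u \<in> E \<Longrightarrow> u \<in> cmor C"
proof (induction rule: rlcm_closure.induct)
  case (base x)
  then show ?case using J_cmor cid_cmor by auto
next
  case (lcm a b m)
  then show ?case using lcm_cmor by blast
qed

lemma J_E: "a \<in> A \<Longrightarrow> J a \<in> E" by (simp add: rlcm_closure.base)
lemma cid_E: "v \<in> L \<Longrightarrow> cid C v \<in> E" by (simp add: rlcm_closure.base)

lemma J_cid: "a \<in> A \<Longrightarrow> cmul C (J a) (cid C (t a)) = J a"
  using cid_right[OF J_cmor] J_simps by metis

lemma CC1:
  assumes "u \<in> E" "x \<in> A" "common_right_multiple C u (J x) M"
  shows "\<exists>u'\<in>E. composable C (J x) u' \<and> is_right_lcm C u (J x) (cmul C (J x) u')"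
  using assms(1,3)
proof (induction arbitrary: M rule: rlcm_closure.induct)
  case (base u)
  have xm: "J x \<in> cmor C" using J_cmor assms(2) .
  have tE: "cid C (t x) \<in> E" using cid_E qv assms(2) by blast
  have ct: "composable C (J x) (cid C (t x))" unfolding composable_def using J_simps by simp
  from base.hyps show ?case
  proof
    assume "u \<in> J ` A"
    then obtain y where y: "y \<in> A" "u = J y" by blast
    have sy: "s y = s x" using crm_src[OF base.prems] y J_simps by simp
    show ?thesis
    proof (cases "y = x")
      case True
      have "is_right_lcm C u (J x) (J x)" using lcm_ldiv[OF ldiv_refl[OF xm]] True y by simp
      then show ?thesis using tE ct J_cid[OF assms(2)] by metis
    next
      case False
      have "is_right_lcm C (J x) (J y) (cmul C (J x) (J (st x y)))"
        using part_atoms_lcm[OF assms(2) y(1)] False sy by metis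
      moreover have "J (st x y) \<in> E" using J_E st_props[OF assms(2) y(1) sy] by blast
      moreover have "composable C (J x) (J (st x y))" unfolding composable_def
        using J_simps st_props[OF assms(2) y(1) sy] by simp
      ultimately show ?thesis using lcm_sym y by metis
    qed
  next
    assume "u \<in> cid C ` L"
    then obtain v where v: "v \<in> L" "u = cid C v" by blast
    have "v = s x" using crm_src[OF base.prems] v J_simps by simp
    then have "left_divides C u (J x)" using cid_ldiv[OF xm] v J_simps by simp
    then have "is_right_lcm C u (J x) (J x)" by (rule lcm_ldiv)
    then show ?thesis using tE ct J_cid[OF assms(2)] by metis
  qed
next
  case (lcm a b m0)
  have xm: "J x \<in> cmor C" using J_cmor assms(2) .
  have am: "a \<in> cmor C" and bm: "b \<in> cmor C" using lcm.hyps E_cmor by auto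
  have m0m: "m0 \<in> cmor C" using lcm_cmor lcm.hyps(3) .
  have am0: "left_divides C a m0" "left_divides C b m0"
    using lcm.hyps(3) unfolding is_right_lcm_def common_right_multiple_def by auto
  have cM: "left_divides C m0 M" "left_divides C (J x) M"
    using lcm.prems unfolding common_right_multiple_def by auto
  obtain a' where a': "a' \<in> E" "composable C (J x) a'" "is_right_lcm C a (J x) (cmul C (J x) a')"
    using lcm.IH(1)[of M] ldiv_trans[OF am0(1) cM(1)] cM(2) unfolding common_right_multiple_def by blast
  obtain b' where b': "b' \<in> E" "composable C (J x) b'" "is_right_lcm C b (J x) (cmul C (J x) b')"
    using lcm.IH(2)[of M] ldiv_trans[OF am0(2) cM(1)] cM(2) unfolding common_right_multiple_def by blast
  have a'm: "a' \<in> cmor C" and b'm: "b' \<in> cmor C" using a' b' E_cmor by auto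
  obtain l where l: "is_right_lcm C m0 (J x) l" using lcm_exists[OF m0m xm lcm.prems] by blast
  then have "left_divides C (J x) l" unfolding is_right_lcm_def common_right_multiple_def by blast
  then obtain z where z: "z \<in> cmor C" "composable C (J x) z" "l = cmul C (J x) z"
    unfolding left_divides_def by blast
  have lm0: "left_divides C m0 l" using l unfolding is_right_lcm_def common_right_multiple_def by blast
  have crma: "common_right_multiple C a (J x) l" "common_right_multiple C b (J x) l"
    using ldiv_trans[OF am0(1) lm0] ldiv_trans[OF am0(2) lm0] l
    unfolding common_right_multiple_def is_right_lcm_def by auto
  have "left_divides C (cmul C (J x) a') (cmul C (J x) z)"
    using a'(3) crma(1) z(3) unfolding is_right_lcm_def by blast
  then have a'z: "left_divides C a' z" using ldiv_cancel[OF xm a'm z(1) a'(2) z(2)] by blast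
  have "left_divides C (cmul C (J x) b') (cmul C (J x) z)"
    using b'(3) crma(2) z(3) unfolding is_right_lcm_def by blast
  then have b'z: "left_divides C b' z" using ldiv_cancel[OF xm b'm z(1) b'(2) z(2)] by blast
  obtain LL where LL: "is_right_lcm C a' b' LL"
    using lcm_exists[OF a'm b'm, of z] a'z b'z unfolding common_right_multiple_def by blast
  have LLE: "LL \<in> E" using rlcm_closure.lcm[OF a'(1) b'(1) LL] .
  have LLm: "LL \<in> cmor C" using lcm_cmor[OF LL] .
  have a'LL: "left_divides C a' LL" "left_divides C b' LL"
    using LL unfolding is_right_lcm_def common_right_multiple_def by auto
  have compL: "composable C (J x) LL" using a'(2) ldiv_src[OF a'LL(1)] unfolding composable_def by simp
  have LLz: "left_divides C LL z" using LL a'z b'z unfolding is_right_lcm_def common_right_multiple_def by blast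
  have 1: "left_divides C (cmul C (J x) LL) l" using ldiv_mono[OF xm compL LLz] z(3) by simp
  have "left_divides C a (cmul C (J x) LL)"
    using ldiv_trans[of a "cmul C (J x) a'"] a'(3) ldiv_mono[OF xm a'(2) a'LL(1)]
    unfolding is_right_lcm_def common_right_multiple_def by blast
  moreover have "left_divides C b (cmul C (J x) LL)"
    using ldiv_trans[of b "cmul C (J x) b'"] b'(3) ldiv_mono[OF xm b'(2) a'LL(2)]
    unfolding is_right_lcm_def common_right_multiple_def by blast
  ultimately have "left_divides C m0 (cmul C (J x) LL)"
    using lcm.hyps(3) unfolding is_right_lcm_def common_right_multiple_def by blast
  moreover have "left_divides C (J x) (cmul C (J x) LL)" using ldiv_mul[OF xm LLm compL] .
  ultimately have 2: "left_divides C l (cmul C (J x) LL)"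
    using l unfolding is_right_lcm_def common_right_multiple_def by blast
  have "l = cmul C (J x) LL" using ldiv_antisym[OF 2 1] .
  then show ?case using LLE compL l by blast
qed

lemma CC:
  assumes "c \<in> cmor C" "u \<in> E" "common_right_multiple C u c M"
  shows "\<exists>u'\<in>E. composable C c u' \<and> is_right_lcm C u c (cmul C c u')"
proof -
  obtain v xs where c: "c = cls v xs" "v \<in> L" "vch v xs" using assms(1) by (rule cmorE)
  have "\<And>v u M. v \<in> L \<Longrightarrow> vch v xs \<Longrightarrow> u \<in> E \<Longrightarrow> common_right_multiple C u (cls v xs) M \<Longrightarrow>
     \<exists>u'\<in>E. composable C (cls v xs) u' \<and> is_right_lcm C u (cls v xs) (cmul C (cls v xs) u')"
  proof (induction xs)
    case Nil
    have um: "u \<in> cmor C" using E_cmor Nil.prems(3) .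
    have sv: "csrc C u = v" using crm_src[OF Nil.prems(4)] by simp
    have "cmul C (cls v []) u = u" using cid_left[OF um] sv cid_cls by simp
    moreover have "is_right_lcm C u (cls v []) u"
      using lcm_sym lcm_ldiv cid_ldiv[OF um] sv cid_cls by metis
    moreover have "composable C (cls v []) u" unfolding composable_def using sv by simp
    ultimately show ?case using Nil.prems(3) by metis
  next
    case (Cons x xs')
    have va: "x \<in> A" "s x = v" "vch (t x) xs'" using Cons.prems(2) by (auto simp: vch_Cons)
    define c' where "c' = cls (t x) xs'"
    define c where "c = cls v (x # xs')"
    have c'm: "c' \<in> cmor C" unfolding c'_def using va qv cls_cmor by blast
    have cm: "c \<in> cmor C" unfolding c_def using Cons.prems(1,2) cls_cmor by blast
    have xm: "J x \<in> cmor C" using J_cmor va(1) .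
    have cdec: "c = cmul C (J x) c'" unfolding c_def c'_def using va by (simp add: jmap_cls)
    have compx: "composable C (J x) c'" unfolding c'_def composable_def using J_simps by simp
    have um: "u \<in> cmor C" using E_cmor Cons.prems(3) .
    have Mc: "left_divides C c M" "left_divides C u M" using Cons.prems(4) unfolding c_def common_right_multiple_def by auto
    have xc: "left_divides C (J x) c" using ldiv_mul[OF xm c'm compx] cdec by simp
    obtain u1 where u1: "u1 \<in> E" "composable C (J x) u1" "is_right_lcm C u (J x) (cmul C (J x) u1)"
      using CC1[OF Cons.prems(3) va(1), of M] ldiv_trans[OF xc Mc(1)] Mc(2)
      unfolding common_right_multiple_def by blast
    have u1m: "u1 \<in> cmor C" using E_cmor u1(1) .
    obtain l where l: "is_right_lcm C u c l" using lcm_exists[OF um cm] Cons.prems(4) c_def by blast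
    then have "left_divides C c l" unfolding is_right_lcm_def common_right_multiple_def by blast
    then obtain z where z: "z \<in> cmor C" "composable C c z" "l = cmul C c z"
      unfolding left_divides_def by blast
    have compz: "composable C c' z" using z(2) ctgt_mul[OF xm c'm compx] cdec unfolding composable_def by simp
    have c'zm: "cmul C c' z \<in> cmor C" using mul_cmor[OF c'm z(1) compz] .
    have compx2: "composable C (J x) (cmul C c' z)" using compx csrc_mul[OF cmor_iscls[OF c'm] cmor_iscls[OF z(1)]]
      unfolding composable_def by simp
    have l2: "l = cmul C (J x) (cmul C c' z)" using z(3) cdec assoc cmor_iscls xm c'm z(1) by metis
    have crm1: "common_right_multiple C u (J x) l"
      using l ldiv_trans[OF xc] unfolding is_right_lcm_def common_right_multiple_def by blast
    then have "left_divides C (cmul C (J x) u1) (cmul C (J x) (cmul C c' z))"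
      using u1(3) l2 unfolding is_right_lcm_def by blast
    then have u1z: "left_divides C u1 (cmul C c' z)" using ldiv_cancel[OF xm u1m c'zm u1(2) compx2] by blast
    have crm2: "common_right_multiple C u1 c' (cmul C c' z)"
      using u1z ldiv_mul[OF c'm z(1) compz] unfolding common_right_multiple_def by blast
    have "\<exists>u'\<in>E. composable C c' u' \<and> is_right_lcm C u1 c' (cmul C c' u')"
      unfolding c'_def by (rule Cons.IH) (use qv va u1(1) crm2[unfolded c'_def] in auto)
    then obtain u2 where u2: "u2 \<in> E" "composable C c' u2" "is_right_lcm C u1 c' (cmul C c' u2)"
      by blast
    have u2m: "u2 \<in> cmor C" using E_cmor u2(1) .
    have compc: "composable C c u2" using u2(2) ctgt_mul[OF xm c'm compx] cdec unfolding composable_def by simp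
    have e2: "cmul C c u2 = cmul C (J x) (cmul C c' u2)" using cdec assoc cmor_iscls xm c'm u2m by metis
    have compx3: "composable C (J x) (cmul C c' u2)" using compx csrc_mul[OF cmor_iscls[OF c'm] cmor_iscls[OF u2m]]
      unfolding composable_def by simp
    have "left_divides C (cmul C c' u2) (cmul C c' z)"
      using u2(3) crm2 unfolding is_right_lcm_def by blast
    then have 1: "left_divides C (cmul C c u2) l" using ldiv_mono[OF xm compx3] e2 l2 by simp
    have "left_divides C u1 (cmul C c' u2)" using u2(3) unfolding is_right_lcm_def common_right_multiple_def by blast
    then have "left_divides C (cmul C (J x) u1) (cmul C c u2)" using ldiv_mono[OF xm u1(2)] e2 by simp
    then have "left_divides C u (cmul C c u2)" using u1(3) ldiv_trans unfolding is_right_lcm_def common_right_multiple_def by blast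
    moreover have "left_divides C c (cmul C c u2)" using ldiv_mul[OF cm u2m compc] .
    ultimately have 2: "left_divides C l (cmul C c u2)" using l unfolding is_right_lcm_def common_right_multiple_def by blast
    have "l = cmul C c u2" using ldiv_antisym[OF 2 1] .
    then show ?case using u2(1) compc l unfolding c_def by blast
  qed
  then show ?thesis using c assms by blast
qed

end

context YBM
begin

lemma head_exists:
  assumes m: "m \<in> cmor C"
  shows "\<exists>s1\<in>E. left_divides C s1 m \<and> (\<forall>u\<in>E. left_divides C u m \<longrightarrow> left_divides C u s1) \<and>
     (0 < clen m \<longrightarrow> 0 < clen s1)"
proof -
  define P where "P k \<longleftrightarrow> (\<exists>u\<in>E. left_divides C u m \<and> clen u = k)" for k
  have P0: "P 0" unfolding P_def using cid_E[OF src_L[OF m]] cid_ldiv[OF m] cid_cls by auto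
  have bd: "\<forall>y. P y \<longrightarrow> y \<le> clen m" unfolding P_def using ldiv_len by blast
  obtain k where k: "P k" "\<forall>y. P y \<longrightarrow> y \<le> k" using Nat.ex_has_greatest_nat[OF P0 bd] by blast
  obtain s1 where s1: "s1 \<in> E" "left_divides C s1 m" "clen s1 = k" using k(1) unfolding P_def by blast
  have s1m: "s1 \<in> cmor C" using E_cmor s1(1) .
  have head: "left_divides C u s1" if u: "u \<in> E" "left_divides C u m" for u
  proof -
    have um: "u \<in> cmor C" using E_cmor u(1) .
    obtain l where l: "is_right_lcm C u s1 l"
      using lcm_exists[OF um s1m, of m] u(2) s1(2) unfolding common_right_multiple_def by blast
    have lE: "l \<in> E" using rlcm_closure.lcm[OF u(1) s1(1) l] .
    have lm: "left_divides C l m" using l u(2) s1(2) unfolding is_right_lcm_def common_right_multiple_def by blast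
    have "clen l \<le> k" using k(2) lE lm unfolding P_def by blast
    moreover have s1l: "left_divides C s1 l" using l unfolding is_right_lcm_def common_right_multiple_def by blast
    ultimately have "s1 = l" using ldiv_len[OF s1l] s1(3) ldiv_len_eq[OF s1l] by simp
    then show ?thesis using l unfolding is_right_lcm_def common_right_multiple_def by blast
  qed
  have pos: "0 < clen s1" if hpos: "0 < clen m"
  proof -
    obtain v xs where c: "m = cls v xs" "v \<in> L" "vch v xs" using m by (rule cmorE)
    then obtain x xs' where xs: "xs = x # xs'" using hpos by (cases xs) auto
    then have vx: "s x = v" "x \<in> A" using c by (auto simp: vch_Cons)
    have "left_divides C (J x) m" using c xs vx ldiv_cls[OF c(2), of "[x]"] by (auto simp: jmap_cls)
    then have "P 1" unfolding P_def using J_E[OF vx(2)] J_simps by blast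
    then show ?thesis using k(2) s1(3) by fastforce
  qed
  show ?thesis
  proof (rule bexI[of _ s1])
    show "s1 \<in> E" using s1(1) .
    show "left_divides C s1 m \<and> (\<forall>u\<in>E. left_divides C u m \<longrightarrow> left_divides C u s1) \<and>
     (0 < clen m \<longrightarrow> 0 < clen s1)" using s1(2) head pos by simp
  qed
qed

lemma all_pairs_Cons:
  "(\<forall>i. Suc i < length (x # xs) \<longrightarrow> R ((x # xs) ! i) ((x # xs) ! Suc i)) \<longleftrightarrow>
   (xs \<noteq> [] \<longrightarrow> R x (hd xs)) \<and> (\<forall>i. Suc i < length xs \<longrightarrow> R (xs ! i) (xs ! Suc i))"
  (is "?l \<longleftrightarrow> ?r")
proof
  assume l: ?l
  show ?r
  proof (intro conjI impI allI)
    assume "xs \<noteq> []" then show "R x (hd xs)" using l[rule_format, of 0] by (cases xs) auto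
  next
    fix i assume "Suc i < length xs" then show "R (xs ! i) (xs ! Suc i)"
      using l[rule_format, of "Suc i"] by simp
  qed
next
  assume r: ?r
  show ?l
  proof (intro allI impI)
    fix i assume i: "Suc i < length (x # xs)"
    show "R ((x # xs) ! i) ((x # xs) ! Suc i)"
    proof (cases i)
      case 0 then show ?thesis using r i by (cases xs) auto
    next
      case (Suc j) then show ?thesis using r i by simp
    qed
  qed
qed

lemma normal_path_Cons:
  "normal_path C S (x # xs) \<longleftrightarrow> x \<in> cmor C \<and> x \<in> sharp C S \<and> normal_path C S xs \<and>
     (xs \<noteq> [] \<longrightarrow> composable C x (hd xs) \<and> greedy C S x (hd xs))"
  unfolding normal_path_def is_chain_def all_pairs_Cons[where R = "composable C"]
    all_pairs_Cons[where R = "greedy C S"] by auto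

lemma normal_single: "x \<in> cmor C \<Longrightarrow> x \<in> sharp C S \<Longrightarrow> normal_path C S [x]"
  using normal_path_Cons[of S x "[]"] unfolding normal_path_def is_chain_def by simp

lemma in_sharp: "x \<in> cmor C \<Longrightarrow> x \<in> S \<Longrightarrow> x \<in> sharp C S"
proof -
  assume x: "x \<in> cmor C" "x \<in> S"
  have "invertible C (cid C (ctgt C x))" using invertible_iff cid_cmor tgt_L[OF x(1)] cid_cls by simp
  moreover have "composable C x (cid C (ctgt C x))" unfolding composable_def by simp
  ultimately show ?thesis unfolding sharp_def using cid_right[OF x(1)] x(2) by (metis (mono_tags, lifting) CollectI UnI1)
qed

lemma NF: "m \<in> cmor C \<Longrightarrow> \<exists>xs. xs \<noteq> [] \<and> normal_path C E xs \<and> list_prod C xs = m"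
proof (induction "clen m" arbitrary: m rule: less_induct)
  case less
  show ?case
  proof (cases "clen m = 0")
    case True
    then have "invertible C m" using invertible_iff less.prems by simp
    then have "m \<in> sharp C E" unfolding sharp_def by blast
    then show ?thesis using normal_single less.prems by (intro exI[of _ "[m]"]) simp
  next
    case False
    obtain s1 where s1: "s1 \<in> E" "left_divides C s1 m"
      "\<forall>u\<in>E. left_divides C u m \<longrightarrow> left_divides C u s1" "0 < clen s1"
      using head_exists[OF less.prems] False by blast
    have s1m: "s1 \<in> cmor C" using E_cmor s1(1) .
    obtain m' where m': "m' \<in> cmor C" "composable C s1 m'" "m = cmul C s1 m'"
      using s1(2) unfolding left_divides_def by blast
    have "clen m' < clen m" using clen_mul[OF s1m m'(1)] m'(3) s1(4) by simp
    then obtain ts where ts: "ts \<noteq> []" "normal_path C E ts" "list_prod C ts = m'"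
      using less.hyps m'(1) by blast
    have tch: "is_chain C ts" using ts(2) unfolding normal_path_def by blast
    note CP = chain_prod[OF tch ts(1)]
    have hdm: "hd ts \<in> cmor C" using tch ts(1) unfolding is_chain_def by (cases ts) auto
    have comp: "composable C s1 (hd ts)" using m'(2) CP ts(3) unfolding composable_def by simp
    have greedy: "greedy C E s1 (hd ts)" unfolding greedy_def
    proof (intro ballI impI)
      fix u c assume u: "u \<in> E" and c: "c \<in> cmor C" and cs: "composable C c s1"
        and d: "left_divides C u (cmul C (cmul C c s1) (hd ts))"
      define p where "p = cmul C s1 (hd ts)"
      have pm: "p \<in> cmor C" unfolding p_def using mul_cmor[OF s1m hdm comp] .
      have e: "cmul C (cmul C c s1) (hd ts) = cmul C c p" unfolding p_def
        using assoc cmor_iscls c s1m hdm by metis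
      have cp: "composable C c p" using cs csrc_mul[OF cmor_iscls[OF s1m] cmor_iscls[OF hdm]]
        unfolding p_def composable_def by simp
      have "common_right_multiple C u c (cmul C c p)"
        using d e ldiv_mul[OF c pm cp] unfolding common_right_multiple_def by simp
      then obtain u' where u': "u' \<in> E" "composable C c u'" "is_right_lcm C u c (cmul C c u')"
        using CC[OF c u] by blast
      have u'm: "u' \<in> cmor C" using E_cmor u'(1) .
      have "left_divides C (cmul C c u') (cmul C c p)"
        using u'(3) d e ldiv_mul[OF c pm cp] unfolding is_right_lcm_def common_right_multiple_def by simp
      then have u'p: "left_divides C u' p" using ldiv_cancel[OF c u'm pm u'(2) cp] by blast
      have "left_divides C p m" unfolding p_def using ldiv_mono[OF s1m comp] CP ts(3) m'(3) by simp
      then have "left_divides C u' s1" using s1(3) u'(1) ldiv_trans[OF u'p] by blast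
      then have "left_divides C (cmul C c u') (cmul C c s1)" using ldiv_mono[OF c u'(2)] by blast
      moreover have "left_divides C u (cmul C c u')" using u'(3) unfolding is_right_lcm_def common_right_multiple_def by blast
      ultimately show "left_divides C u (cmul C c s1)" using ldiv_trans by blast
    qed
    have "normal_path C E (s1 # ts)" unfolding normal_path_Cons
      using s1m in_sharp[OF s1m s1(1)] ts(1,2) comp greedy by blast
    moreover have "list_prod C (s1 # ts) = m"
      using list_prod_Cons[OF ts(1) cmor_iscls[OF s1m]] tch cmor_iscls ts(3) m'(3)
      unfolding is_chain_def by (metis subsetD)
    ultimately show ?thesis by blast
  qed
qed

lemma head_div:
  assumes "normal_path C S xs" "xs \<noteq> []" "u \<in> S" "c \<in> cmor C" "composable C c (hd xs)"
    "left_divides C u (cmul C c (list_prod C xs))"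
  shows "left_divides C u (cmul C c (hd xs))"
  using assms
proof (induction xs arbitrary: c)
  case (Cons x xs)
  show ?case
  proof (cases "xs = []")
    case True then show ?thesis using Cons.prems by simp
  next
    case False
    have n: "x \<in> cmor C" "normal_path C S xs" "composable C x (hd xs)" "greedy C S x (hd xs)"
      using Cons.prems(1) False normal_path_Cons by auto
    have tch: "is_chain C xs" using n(2) unfolding normal_path_def by blast
    note CP = chain_prod[OF tch False]
    have cl: "\<forall>z\<in>set xs. iscls z" using tch cmor_iscls unfolding is_chain_def by blast
    have e1: "list_prod C (x # xs) = cmul C x (list_prod C xs)"
      using list_prod_Cons[OF False cmor_iscls[OF n(1)] cl] .
    have cx: "composable C c x" using Cons.prems(5) by simp
    have cxm: "cmul C c x \<in> cmor C" using mul_cmor[OF Cons.prems(4) n(1) cx] .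
    have e2: "cmul C c (list_prod C (x # xs)) = cmul C (cmul C c x) (list_prod C xs)"
      using e1 assoc cmor_iscls Cons.prems(4) n(1) CP by metis
    have comp2: "composable C (cmul C c x) (hd xs)"
      using n(3) ctgt_mul[OF Cons.prems(4) n(1) cx] unfolding composable_def by simp
    have "left_divides C u (cmul C (cmul C c x) (hd xs))"
      using Cons.IH[OF n(2) False Cons.prems(3) cxm comp2] Cons.prems(6) e2 by simp
    then show ?thesis using n(4) Cons.prems(3,4) cx unfolding greedy_def by simp
  qed
qed simp

lemma garside_E:
  "garside_family C E \<and> J ` A \<subseteq> E \<and> cid C ` L \<subseteq> E \<and>
   (\<forall>S. garside_family C S \<and> J ` A \<subseteq> S \<and> cid C ` L \<subseteq> S \<longrightarrow> E \<subseteq> S)"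
proof (intro conjI allI impI)
  show "garside_family C E" unfolding garside_family_def using E_cmor NF by (intro conjI subsetI ballI) auto
  show "J ` A \<subseteq> E" using J_E by blast
  show "cid C ` L \<subseteq> E" using cid_E by blast
next
  fix S assume S: "garside_family C S \<and> J ` A \<subseteq> S \<and> cid C ` L \<subseteq> S"
  have Sm: "S \<subseteq> cmor C" using S unfolding garside_family_def by blast
  show "E \<subseteq> S"
  proof
    fix x assume "x \<in> E"
    then show "x \<in> S"
    proof (induction rule: rlcm_closure.induct)
      case (base x) then show ?case using S by blast
    next
      case (lcm a b m)
      have mm: "m \<in> cmor C" using lcm_cmor[OF lcm.hyps(3)] .
      have "\<forall>x\<in>cmor C. \<exists>xs. xs \<noteq> [] \<and> normal_path C S xs \<and> list_prod C xs = x"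
        using S unfolding garside_family_def by (elim conjE)
      then have "\<exists>xs. xs \<noteq> [] \<and> normal_path C S xs \<and> list_prod C xs = m" using mm by (rule bspec)
      then obtain xs where xs: "xs \<noteq> []" "normal_path C S xs" "list_prod C xs = m"
        by (elim exE conjE)
      have tch: "is_chain C xs" using xs(2) unfolding normal_path_def by blast
      note CP = chain_prod[OF tch xs(1)]
      have hm: "hd xs \<in> cmor C" using tch xs(1) unfolding is_chain_def by (cases xs) auto
      define c where "c = cid C (csrc C m)"
      have cm: "c \<in> cmor C" unfolding c_def using cid_cmor src_L mm by blast
      have comp: "composable C c (hd xs)" unfolding c_def composable_def using CP xs(3) by simp
      have e1: "cmul C c (list_prod C xs) = m" unfolding c_def using cid_left[OF mm] xs(3) by simp
      have e2: "cmul C c (hd xs) = hd xs" unfolding c_def using cid_left[OF hm] CP xs(3) by simp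
      have "left_divides C a (hd xs)"
        using head_div[OF xs(2,1) lcm.IH(1) cm comp] e1 e2 lcm.hyps(3)
        unfolding is_right_lcm_def common_right_multiple_def by simp
      moreover have "left_divides C b (hd xs)"
        using head_div[OF xs(2,1) lcm.IH(2) cm comp] e1 e2 lcm.hyps(3)
        unfolding is_right_lcm_def common_right_multiple_def by simp
      ultimately have "left_divides C m (hd xs)"
        using lcm.hyps(3) unfolding is_right_lcm_def common_right_multiple_def by blast
      moreover have "left_divides C (hd xs) m" using CP xs(3) by simp
      ultimately have mh: "m = hd xs" by (rule ldiv_antisym)
      have "hd xs \<in> sharp C S" using xs(1,2) unfolding normal_path_def by (cases xs) auto
      then show ?case unfolding sharp_def
      proof (elim UnE CollectE exE conjE)
        fix y e assume h: "hd xs = cmul C y e" "y \<in> S" "invertible C e" "composable C y e"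
        obtain w where w: "w \<in> L" "e = cid C w" using invertible_id[OF h(3)] unfolding is_identity_def by auto
        have "ctgt C y = w" using h(4) w unfolding composable_def by simp
        then have ee: "e = cid C (ctgt C y)" using w(2) by simp
        have ym: "y \<in> cmor C" using Sm h(2) by blast
        have "hd xs = y" using h(1) cid_right[OF ym] ee by simp
        then show "m \<in> S" using mh h(2) by simp
      next
        assume "invertible C (hd xs)"
        then obtain w where w: "w \<in> L" "hd xs = cid C w" using invertible_id unfolding is_identity_def by auto
        then show "m \<in> S" using mh S by auto
      qed
    qed
  qed
qed

end

theorem theorem5p7:
  fixes L :: "'v set" and A :: "'a set" and s t :: "'a \<Rightarrow> 'v"
    and \<sigma> :: "'a \<times> 'a \<Rightarrow> 'a \<times> 'a"
  assumes "L \<noteq> {}"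
    and "yang_baxter_map L A s t \<sigma>"
    and "involutive A s t \<sigma>"
    and "left_nondegenerate A s t \<sigma>"
  defines "C \<equiv> structure_cat L A s t \<sigma>"
    and "j \<equiv> jmap A s t \<sigma>"
    and "star \<equiv> star_op A s t \<sigma>"
  shows "inj_on j A
    \<and> (\<forall>P Q. valid_path L A s t P \<longrightarrow> valid_path L A s t Q \<longrightarrow>
          (path_equiv A s t \<sigma> P Q \<longleftrightarrow> (star_step A s t \<sigma>)\<^sup>*\<^sup>* P Q))
    \<and> (\<exists>K::real. \<forall>P Q. valid_path L A s t P \<longrightarrow> valid_path L A s t Q \<longrightarrow>
          path_equiv A s t \<sigma> P Q \<longrightarrow>
          (\<exists>n. (star_step A s t \<sigma> ^^ n) P Q \<and>
               real n \<le> K * (real (length (snd P) + length (snd Q)))\<^sup>2))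
    \<and> (\<forall>x. invertible C x \<longrightarrow> is_identity C x)
    \<and> left_cancellative C
    \<and> unique_conditional_right_lcms C
    \<and> (\<forall>x\<in>A. \<forall>y\<in>A. x \<noteq> y \<and> s x = s y \<longrightarrow>
          cmul C (j x) (j (star x y)) = cmul C (j y) (j (star y x)) \<and>
          is_right_lcm C (j x) (j y) (cmul C (j x) (j (star x y))))
    \<and> noetherian C
    \<and> {x. atom C x} = j ` A
    \<and> (let E = rlcm_closure C (j ` A \<union> cid C ` L) in
          garside_family C E \<and> j ` A \<subseteq> E \<and> cid C ` L \<subseteq> E \<and>
          (\<forall>S. garside_family C S \<and> j ` A \<subseteq> S \<and> cid C ` L \<subseteq> S \<longrightarrow> E \<subseteq> S))"
proof -
  interpret Y: YBM L A s t \<sigma>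
    by unfold_locales (use assms(2-4) in auto)
  have 1: "inj_on j A" unfolding j_def by (rule Y.inj_j)
  have 2: "\<forall>P Q. valid_path L A s t P \<longrightarrow> valid_path L A s t Q \<longrightarrow>
          (path_equiv A s t \<sigma> P Q \<longleftrightarrow> (star_step A s t \<sigma>)\<^sup>*\<^sup>* P Q)"
    using Y.part2 by blast
  have 3: "\<exists>K::real. \<forall>P Q. valid_path L A s t P \<longrightarrow> valid_path L A s t Q \<longrightarrow>
          path_equiv A s t \<sigma> P Q \<longrightarrow>
          (\<exists>n. (star_step A s t \<sigma> ^^ n) P Q \<and>
               real n \<le> K * (real (length (snd P) + length (snd Q)))\<^sup>2)"
    by (rule Y.part3)
  have 4: "\<forall>x. invertible C x \<longrightarrow> is_identity C x" unfolding C_def using Y.invertible_id by blast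
  have 5: "left_cancellative C" unfolding C_def by (rule Y.left_canc)
  have 6: "unique_conditional_right_lcms C" unfolding C_def by (rule Y.ucrl)
  have 7: "\<forall>x\<in>A. \<forall>y\<in>A. x \<noteq> y \<and> s x = s y \<longrightarrow>
          cmul C (j x) (j (star x y)) = cmul C (j y) (j (star y x)) \<and>
          is_right_lcm C (j x) (j y) (cmul C (j x) (j (star x y)))"
    unfolding C_def j_def star_def using Y.part_atoms_lcm by blast
  have 8: "noetherian C" unfolding C_def by (rule Y.noeth)
  have 9: "{x. atom C x} = j ` A" unfolding C_def j_def by (rule Y.atoms)
  have 10: "let E = rlcm_closure C (j ` A \<union> cid C ` L) in
          garside_family C E \<and> j ` A \<subseteq> E \<and> cid C ` L \<subseteq> E \<and>
          (\<forall>S. garside_family C S \<and> j ` A \<subseteq> S \<and> cid C ` L \<subseteq> S \<longrightarrow> E \<subseteq> S)"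
    unfolding C_def j_def Let_def by (rule Y.garside_E)
  show ?thesis using 1 2 3 4 5 6 7 8 9 10 by blast
qed

end
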